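(* Let $(\mathcal{T}(n))_{n\ge1}$ be the delayed attachment tree process with $\beta\in[0,1)$, where $f$ satisfies Assumption 1 and $(\mu,f)$ satisfy Assumption 2. Let $Z_k(n):=\#\{v\in\mathcal{T}(n):\deg(v,n)=k\}$ and $\Psi(n):=\sum_{v\in\mathcal{T}(n)}f(\deg(v,n))=\sum_{k\ge1}f(k)Z_k(n)$. Define, for $n\ge2$, $$\pi_1(n):=\mathbb{E}[Z_1(n+1)-Z_1(n)\mid\mathcal{F}_n]-1+f(1)\frac{Z_1(n)}{\Psi(n)},$$ $$\pi_k(n):=\mathbb{E}[Z_k(n+1)-Z_k(n)\mid\mathcal{F}_n]-f(k-1)\frac{Z_{k-1}(n)}{\Psi(n)}+f(k)\frac{Z_k(n)}{\Psi(n)},\qquad k\ge2.$$ Then for every $k\ge1$, $\pi_k(n)\to0$ almost surely and in $L^1$ as $n\to\infty$.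
   Context: Model. Fix $\beta\in[0,1)$, a probability distribution $\mu$ on $[0,\infty)$ (the delay distribution) and a function $f:\{1,2,\dots\}\to(0,\infty)$ (the attachment function); $\xi$ denotes a generic random variable with law $\mu$. For $x\in\mathbb{R}$ let $\lfloor x\rfloor_+:=\max\{\lfloor x\rfloor,1\}$. A sequence of random rooted trees $(\mathcal{T}(n))_{n\ge1}$ is grown as follows; $\mathcal{T}(n)$ has vertex set $\{v_1,\dots,v_n\}$ and root $\rho=v_1$. - $\mathcal{T}(1)$ consists of $v_1$ alone, and $\mathcal{T}(2)$ consists of $v_1,v_2$ with $v_1$ the parent of $v_2$. - For $j\ge i$, $\deg(v_i,j)$ is the number of children of $v_i$ in $\mathcal{T}(j)$ plus one (so $\deg(v_i,i)=1$), and $\deg(v_i,j):=0$ for $j<i$. - For $n\ge2$, given $\mathcal{T}(1),\dots,\mathcal{T}(n)$, draw $\xi_{n+1}\sim\mu$ independently of everything before and put $m:=\lfloor n-n^{\beta}\xi_{n+1}\rfloor_+$. The new vertex $v_{n+1}$ chooses its parent $v\in\mathcal{T}(m)$ with probability $f(\deg(v,m))/\sum_{u\in\mathcal{T}(m)}f(\deg(u,m))$, and $\mathcal{T}(n+1)$ is $\mathcal{T}(n)$ together with this new vertex and edge. - $\mathcal{F}_n$ denotes the $\sigma$-field generated by $\mathcal{T}(1),\dots,\mathcal{T}(n)$ and $\xi_2,\dots,\xi_n$. Assumption 1 on $f$: (i) $f_*:=\inf_{k\ge1}f(k)>0$; (ii) there is $C<\infty$ with $f(k)\le Ck$ for all $k\ge1$;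 (iii) for $\lambda>0$ let $\hat\rho(\lambda):=\sum_{k=1}^\infty\prod_{i=1}^k\frac{f(i)}{\lambda+f(i)}\in(0,\infty]$ and $\underline\lambda:=\inf\{\lambda>0:\hat\rho(\lambda)<\infty\}$; then $\underline\lambda<\infty$ and $\lim_{\lambda\downarrow\underline\lambda}\hat\rho(\lambda)>1$. The Malthusian parameter $\lambda^*\in(0,\infty)$ is the unique solution of $\hat\rho(\lambda^* )=1$. Assumption 2: (a) $\lim_{n\to\infty}\mathbb{E}\Big[\frac{n^\beta\xi\,\mathbf 1\{n-n^\beta\xi\ge1\}}{\lfloor n-n^\beta\xi\rfloor_+}\Big]=0$; (b) $f$ satisfies one of the following: (A) $f(k)=k+\alpha$ for all $k\ge1$, for a constant $\alpha>-1$; (B) $\lim_{k\to\infty}f(k)/k=0$ and $f$ is Lipschitz; (C) $\lim_{k\to\infty}f(k)/k=0$ and $f$ is non-decreasing. *)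

theory Defs
  imports "HOL-Probability.Probability"
begin

text \<open>Vertices v_1, v_2, ... are encoded by their indices 1, 2, ...; a realisation of the
tree process is encoded by the parent map par, where par l is the index of the
parent of v_l (l \<ge> 2).\<close>

definition floor_plus :: "real \<Rightarrow> int" where
  "floor_plus x = max \<lfloor>x\<rfloor> 1"

definition tdeg :: "(nat \<Rightarrow> nat) \<Rightarrow> nat \<Rightarrow> nat \<Rightarrow> nat" where
  "tdeg par i j = (if i \<le> j then 1 + card {l \<in> {i+1..j}. par l = i} else 0)"

definition delay_time :: "real \<Rightarrow> nat \<Rightarrow> real \<Rightarrow> nat" where
  "delay_time \<beta> n x = nat (floor_plus (real n - real n powr \<beta> * x))"

text \<open>Probability that v_{n+1} chooses v_i as its parent, given the past and xi_{n+1} = x.\<close>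
definition attach_prob ::
  "(nat \<Rightarrow> real) \<Rightarrow> real \<Rightarrow> nat \<Rightarrow> (nat \<Rightarrow> nat) \<Rightarrow> nat \<Rightarrow> real \<Rightarrow> real" where
  "attach_prob f \<beta> n par i x =
     (let m = delay_time \<beta> n x in
      if 1 \<le> i \<and> i \<le> m
      then f (tdeg par i m) / (\<Sum>u\<in>{1..m}. f (tdeg par u m))
      else 0)"

definition Zcount :: "(nat \<Rightarrow> nat) \<Rightarrow> nat \<Rightarrow> nat \<Rightarrow> nat" where
  "Zcount par k n = card {u \<in> {1..n}. tdeg par u n = k}"

definition Psi :: "(nat \<Rightarrow> real) \<Rightarrow> (nat \<Rightarrow> nat) \<Rightarrow> nat \<Rightarrow> real" where
  "Psi f par n = (\<Sum>u\<in>{1..n}. f (tdeg par u n))"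

text \<open>The sigma-field F_n generated by T(1),...,T(n) (i.e. par 2, ..., par n) and xi_2, ..., xi_n.\<close>
definition filt :: "'a measure \<Rightarrow> (nat \<Rightarrow> 'a \<Rightarrow> nat) \<Rightarrow> (nat \<Rightarrow> 'a \<Rightarrow> real) \<Rightarrow> nat \<Rightarrow> 'a measure" where
  "filt M par xi n = sigma (space M)
     ((\<Union>k\<in>{2..n}. {par k -` {i} \<inter> space M | i. True}) \<union>
      (\<Union>k\<in>{2..n}. {xi k -` B \<inter> space M | B. B \<in> sets borel}))"

definition rho_hat :: "(nat \<Rightarrow> real) \<Rightarrow> real \<Rightarrow> ereal" where
  "rho_hat f lam = (\<Sum>k. ereal (\<Prod>i\<in>{1..Suc k}. f i / (lam + f i)))"

definition lambda_under :: "(nat \<Rightarrow> real) \<Rightarrow> real" where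
  "lambda_under f = Inf {lam. lam > 0 \<and> rho_hat f lam < \<infinity>}"

definition assumption1 :: "(nat \<Rightarrow> real) \<Rightarrow> bool" where
  "assumption1 f \<longleftrightarrow>
     (\<forall>k\<ge>1. f k > 0) \<and>
     (INF k\<in>{1..}. f k) > 0 \<and>
     (\<exists>C. \<forall>k\<ge>1. f k \<le> C * real k) \<and>
     {lam. lam > 0 \<and> rho_hat f lam < \<infinity>} \<noteq> {} \<and>
     (\<exists>L. ((rho_hat f) \<longlongrightarrow> L) (at_right (lambda_under f)) \<and> L > 1)"

definition assumption2 :: "real \<Rightarrow> real measure \<Rightarrow> (nat \<Rightarrow> real) \<Rightarrow> bool" where
  "assumption2 \<beta> \<mu> f \<longleftrightarrow>
     ((\<lambda>n::nat. \<integral>x. (real n powr \<beta> * x * indicator {x. real n - real n powr \<beta> * x \<ge> 1} x)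
                       / real_of_int (floor_plus (real n - real n powr \<beta> * x)) \<partial>\<mu>)
        \<longlonglongrightarrow> 0) \<and>
     ((\<exists>\<alpha>>-1. \<forall>k\<ge>1. f k = real k + \<alpha>) \<or>
      (((\<lambda>k. f k / real k) \<longlonglongrightarrow> 0) \<and>
         (\<exists>L. \<forall>j\<ge>1. \<forall>k\<ge>1. \<bar>f j - f k\<bar> \<le> L * \<bar>real j - real k\<bar>)) \<or>
      (((\<lambda>k. f k / real k) \<longlonglongrightarrow> 0) \<and> mono_on {1..} f))"

definition delayed_tree_process ::
  "'a measure \<Rightarrow> real \<Rightarrow> real measure \<Rightarrow> (nat \<Rightarrow> real) \<Rightarrow>
   (nat \<Rightarrow> 'a \<Rightarrow> nat) \<Rightarrow> (nat \<Rightarrow> 'a \<Rightarrow> real) \<Rightarrow> bool" where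
  "delayed_tree_process M \<beta> \<mu> f par xi \<longleftrightarrow>
     (\<forall>n. par n \<in> measurable M (count_space UNIV)) \<and>
     (\<forall>n. xi n \<in> borel_measurable M) \<and>
     (\<forall>\<omega>\<in>space M. par 2 \<omega> = 1) \<and>
     (\<forall>n\<ge>2. \<forall>A\<in>sets (filt M par xi n). \<forall>B\<in>sets borel. \<forall>i.
        measure M {\<omega>\<in>space M. \<omega> \<in> A \<and> xi (Suc n) \<omega> \<in> B \<and> par (Suc n) \<omega> = i}
        = (\<integral>\<omega>. indicator A \<omega> *
              (\<integral>x. indicator B x * attach_prob f \<beta> n (\<lambda>l. par l \<omega>) i x \<partial>\<mu>) \<partial>M))"

definition pi_k ::
  "'a measure \<Rightarrow> (nat \<Rightarrow> real) \<Rightarrow> (nat \<Rightarrow> 'a \<Rightarrow> nat) \<Rightarrow> (nat \<Rightarrow> 'a \<Rightarrow> real) \<Rightarrow> nat \<Rightarrow> nat \<Rightarrow> 'a \<Rightarrow> real" where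
  "pi_k M f par xi k n \<omega> =
     real_cond_exp M (filt M par xi n)
       (\<lambda>\<omega>. real (Zcount (\<lambda>l. par l \<omega>) k (Suc n)) - real (Zcount (\<lambda>l. par l \<omega>) k n)) \<omega>
     - (if k = 1 then 1
        else f (k - 1) * real (Zcount (\<lambda>l. par l \<omega>) (k - 1) n) / Psi f (\<lambda>l. par l \<omega>) n)
     + f k * real (Zcount (\<lambda>l. par l \<omega>) k n) / Psi f (\<lambda>l. par l \<omega>) n"

end

theory Submission
  imports Defs
begin

lemma tdeg_split:
  assumes "i \<le> m" "m \<le> n"
  shows "tdeg p i n = tdeg p i m + card {l\<in>{m+1..n}. p l = i}"
proof -
  have "{l\<in>{i+1..n}. p l = i} = {l\<in>{i+1..m}. p l = i} \<union> {l\<in>{m+1..n}. p l = i}"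
    using assms by auto
  moreover have "card ({l\<in>{i+1..m}. p l = i} \<union> {l\<in>{m+1..n}. p l = i})
     = card {l\<in>{i+1..m}. p l = i} + card {l\<in>{m+1..n}. p l = i}"
    by (rule card_Un_disjoint) auto
  ultimately show ?thesis using assms by (simp add: tdeg_def)
qed

lemma tdeg_mono: "i \<le> m \<Longrightarrow> m \<le> n \<Longrightarrow> tdeg p i m \<le> tdeg p i n"
  using tdeg_split[of i m n p] by simp

lemma tdeg_pos: "i \<le> j \<Longrightarrow> 1 \<le> tdeg p i j"
  by (simp add: tdeg_def)

lemma sum_card_fibres:
  assumes "finite L" "finite I"
  shows "(\<Sum>i\<in>I. card {l\<in>L. p l = i}) \<le> card L"
proof -
  have "(\<Sum>i\<in>I. card {l\<in>L. p l = i}) = card (\<Union>i\<in>I. {l\<in>L. p l = i})"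
    by (rule card_UN_disjoint[symmetric]) (use assms in auto)
  also have "\<dots> \<le> card L" by (rule card_mono) (use assms in auto)
  finally show ?thesis .
qed

lemma sum_tdeg_diff:
  assumes "m \<le> n"
  shows "(\<Sum>i\<in>{1..m}. real (tdeg p i n) - real (tdeg p i m)) \<le> real n - real m"
proof -
  have "(\<Sum>i\<in>{1..m}. real (tdeg p i n) - real (tdeg p i m))
      = real (\<Sum>i\<in>{1..m}. card {l\<in>{m+1..n}. p l = i})"
    using tdeg_split[OF _ assms, of _ p] by (simp add: of_nat_sum)
  also have "\<dots> \<le> real (card {m+1..n})"
  proof -
    have "(\<Sum>i\<in>{1..m}. card {l\<in>{m+1..n}. p l = i}) \<le> card {m+1..n}"
      by (rule sum_card_fibres) auto
    then show ?thesis by (simp only: of_nat_le_iff)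
  qed
  finally show ?thesis using assms by simp
qed

lemma sum_tdeg_le: "(\<Sum>i\<in>{1..n}. real (tdeg p i n)) \<le> 2 * real n"
proof -
  have "\<And>i. i \<in> {1..n} \<Longrightarrow> real (tdeg p i n) \<le> 1 + real (card {l\<in>{2..n}. p l = i})"
  proof -
    fix i assume i: "i \<in> {1..n}"
    have "card {l\<in>{i+1..n}. p l = i} \<le> card {l\<in>{2..n}. p l = i}"
      by (rule card_mono) (use i in auto)
    then show "real (tdeg p i n) \<le> 1 + real (card {l\<in>{2..n}. p l = i})"
      using i by (simp add: tdeg_def)
  qed
  then have "(\<Sum>i\<in>{1..n}. real (tdeg p i n)) \<le> (\<Sum>i\<in>{1..n}. 1 + real (card {l\<in>{2..n}. p l = i}))"
    by (rule sum_mono)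
  also have "\<dots> = real n + real (\<Sum>i\<in>{1..n}. card {l\<in>{2..n}. p l = i})"
    by (simp add: sum.distrib of_nat_sum)
  also have "\<dots> \<le> real n + real (card {2..n})"
  proof -
    have "(\<Sum>i\<in>{1..n}. card {l\<in>{2..n}. p l = i}) \<le> card {2..n}"
      by (rule sum_card_fibres) auto
    then show ?thesis by (simp only: add_le_cancel_left of_nat_le_iff)
  qed
  also have "\<dots> \<le> 2 * real n" by simp
  finally show ?thesis .
qed

lemma sum_tdeg_new:
  assumes "m \<le> n"
  shows "(\<Sum>i\<in>{m+1..n}. real (tdeg p i n)) \<le> 2 * (real n - real m)"
proof -
  have "\<And>i. i \<in> {m+1..n} \<Longrightarrow> real (tdeg p i n) \<le> 1 + real (card {l\<in>{m+1..n}. p l = i})"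
  proof -
    fix i assume i: "i \<in> {m+1..n}"
    have "card {l\<in>{i+1..n}. p l = i} \<le> card {l\<in>{m+1..n}. p l = i}"
      by (rule card_mono) (use i in auto)
    then show "real (tdeg p i n) \<le> 1 + real (card {l\<in>{m+1..n}. p l = i})"
      using i by (simp add: tdeg_def)
  qed
  then have "(\<Sum>i\<in>{m+1..n}. real (tdeg p i n)) \<le> (\<Sum>i\<in>{m+1..n}. 1 + real (card {l\<in>{m+1..n}. p l = i}))"
    by (rule sum_mono)
  also have "\<dots> = real (card {m+1..n}) + real (\<Sum>i\<in>{m+1..n}. card {l\<in>{m+1..n}. p l = i})"
    by (simp add: sum.distrib of_nat_sum)
  also have "\<dots> \<le> real (card {m+1..n}) + real (card {m+1..n})"
  proof -
    have "(\<Sum>i\<in>{m+1..n}. card {l\<in>{m+1..n}. p l = i}) \<le> card {m+1..n}"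
      by (rule sum_card_fibres) auto
    then show ?thesis by (simp only: add_le_cancel_left of_nat_le_iff)
  qed
  also have "\<dots> = 2 * (real n - real m)" using assms by simp
  finally show ?thesis .
qed

lemma arith_combine:
  fixes S U Z Pm Pn fs fj Fj dl K C m n :: real
  assumes fs: "fs > 0" and m1: "1 \<le> m" and mn: "m \<le> n"
    and Pm: "fs * m \<le> Pm" and Pn: "fs * n \<le> Pn"
    and U: "0 \<le> U" "U \<le> m" "U \<le> Z" "Z - U \<le> n - m"
    and S1: "\<bar>S - fj * U / Pm\<bar> \<le> Fj * (n - m) / Pm"
    and D: "\<bar>Pn - Pm\<bar> \<le> 2 * dl * n + (K + 2 * C) * (n - m)"
    and fj: "fj \<ge> 0" and Fj: "Fj \<ge> 0" and KC: "K + 2 * C \<ge> 0" and dl: "dl \<ge> 0"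
  shows "\<bar>S - fj * Z / Pn\<bar> \<le> (Fj / fs + fj * (K + 2 * C) / fs^2 + fj / fs) * ((n - m) / m)
            + 2 * fj / fs^2 * dl"
proof -
  have m0: "m > 0" using m1 by simp
  have n0: "n > 0" using m1 mn by simp
  have Pm0: "Pm > 0" using fs m0 Pm by (smt (verit) mult_pos_pos)
  have Pn0: "Pn > 0" using fs n0 Pn by (smt (verit) mult_pos_pos)
  have nm: "n - m \<ge> 0" using mn by simp
  have r1: "(n - m) / n \<le> (n - m) / m"
    by (intro divide_left_mono) (use m0 n0 mn in auto)
  have T1: "Fj * (n - m) / Pm \<le> Fj / fs * ((n - m) / m)"
  proof -
    have "Fj * (n - m) / Pm \<le> Fj * (n - m) / (fs * m)"
      using Pm Fj nm fs m0 Pm0 by (intro divide_left_mono) (auto intro!: mult_pos_pos)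
    also have "\<dots> = Fj / fs * ((n - m) / m)" by simp
    finally show ?thesis .
  qed
  have eq: "U / Pm - Z / Pn = U * (Pn - Pm) / (Pm * Pn) - (Z - U) / Pn"
    using Pm0 Pn0 by (simp add: field_simps)
  have a1: "\<bar>U * (Pn - Pm) / (Pm * Pn)\<bar> \<le> \<bar>Pn - Pm\<bar> / (fs * fs * n)"
  proof -
    have "\<bar>U * (Pn - Pm) / (Pm * Pn)\<bar> = (U / Pm) * (\<bar>Pn - Pm\<bar> / Pn)"
      using U Pm0 Pn0 by (simp add: abs_mult abs_divide)
    also have "\<dots> \<le> (1 / fs) * (\<bar>Pn - Pm\<bar> / (fs * n))"
    proof (rule mult_mono)
      show "U / Pm \<le> 1 / fs"
      proof -
        have "U * fs \<le> m * fs" using U fs by (intro mult_right_mono) auto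
        then have "U * fs \<le> Pm" using Pm by (metis mult.commute order_trans)
        then show ?thesis using fs Pm0 by (simp add: field_simps)
      qed
      show "\<bar>Pn - Pm\<bar> / Pn \<le> \<bar>Pn - Pm\<bar> / (fs * n)"
        using Pn fs n0 Pn0 by (intro divide_left_mono) (auto intro!: mult_pos_pos)
    qed (use fs n0 Pn0 in auto)
    also have "\<dots> = \<bar>Pn - Pm\<bar> / (fs * fs * n)" by simp
    finally show ?thesis .
  qed
  have a2: "\<bar>(Z - U) / Pn\<bar> \<le> (n - m) / (fs * n)"
  proof -
    have "\<bar>(Z - U) / Pn\<bar> = (Z - U) / Pn" using U Pn0 by simp
    also have "\<dots> \<le> (n - m) / Pn" using U Pn0 by (simp add: divide_right_mono)
    also have "\<dots> \<le> (n - m) / (fs * n)" using Pn fs n0 nm Pn0 by (intro divide_left_mono) (auto intro!: mult_pos_pos)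
    finally show ?thesis .
  qed
  have a3: "\<bar>Pn - Pm\<bar> / (fs * fs * n) \<le> 2 * dl / fs^2 + (K + 2 * C) / fs^2 * ((n - m) / m)"
  proof -
    have "\<bar>Pn - Pm\<bar> / (fs * fs * n) \<le> (2 * dl * n + (K + 2 * C) * (n - m)) / (fs * fs * n)"
      using D fs n0 by (intro divide_right_mono) auto
    also have "\<dots> = 2 * dl / fs^2 + (K + 2 * C) / fs^2 * ((n - m) / n)"
      using fs n0 by (simp add: field_simps power2_eq_square)
    also have "\<dots> \<le> 2 * dl / fs^2 + (K + 2 * C) / fs^2 * ((n - m) / m)"
      using r1 KC fs by (intro add_left_mono mult_left_mono) auto
    finally show ?thesis .
  qed
  have a4: "(n - m) / (fs * n) \<le> 1 / fs * ((n - m) / m)"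
  proof -
    have "(n - m) / (fs * n) = 1 / fs * ((n - m) / n)" by simp
    also have "\<dots> \<le> 1 / fs * ((n - m) / m)" using r1 fs by (intro mult_left_mono) auto
    finally show ?thesis .
  qed
  have e2: "fj * U / Pm - fj * Z / Pn = fj * (U / Pm - Z / Pn)"
    by (simp add: right_diff_distrib)
  have a5: "\<bar>U / Pm - Z / Pn\<bar> \<le> \<bar>Pn - Pm\<bar> / (fs * fs * n) + (n - m) / (fs * n)"
    using abs_triangle_ineq4[of "U * (Pn - Pm) / (Pm * Pn)" "(Z - U) / Pn"] a1 a2 unfolding eq by (meson add_mono order_trans)
  have "\<bar>fj * U / Pm - fj * Z / Pn\<bar> = fj * \<bar>U / Pm - Z / Pn\<bar>"
    unfolding e2 using fj by (simp add: abs_mult)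
  also have "\<dots> \<le> fj * (\<bar>Pn - Pm\<bar> / (fs * fs * n) + (n - m) / (fs * n))"
    using a5 fj by (intro mult_left_mono) auto
  also have "\<dots> \<le> fj * (2 * dl / fs^2 + (K + 2 * C) / fs^2 * ((n - m) / m) + 1 / fs * ((n - m) / m))"
    using a3 a4 fj by (intro mult_left_mono) auto
  finally have B2: "\<bar>fj * U / Pm - fj * Z / Pn\<bar> \<le> fj * (2 * dl / fs^2 + (K + 2 * C) / fs^2 * ((n - m) / m) + 1 / fs * ((n - m) / m))" .
  have "\<bar>S - fj * Z / Pn\<bar> \<le> \<bar>S - fj * U / Pm\<bar> + \<bar>fj * U / Pm - fj * Z / Pn\<bar>"
    using abs_triangle_ineq[of "S - fj * U / Pm" "fj * U / Pm - fj * Z / Pn"] by simp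
  also have "\<dots> \<le> Fj / fs * ((n - m) / m) + fj * (2 * dl / fs^2 + (K + 2 * C) / fs^2 * ((n - m) / m) + 1 / fs * ((n - m) / m))"
    using S1 T1 B2 by (meson add_mono order_trans)
  also have "\<dots> = (Fj / fs + fj * (K + 2 * C) / fs^2 + fj / fs) * ((n - m) / m) + 2 * fj / fs^2 * dl"
    using fs m0 by (simp add: field_simps)
  finally show ?thesis .
qed

lemma sum_split_nat:
  fixes g :: "nat \<Rightarrow> real"
  assumes "m \<le> n"
  shows "sum g {1..n} = sum g {1..m} + sum g {m+1..n}"
proof -
  have "{1..n} = {1..m} \<union> {m+1..n}" using assms by auto
  then show ?thesis by (simp add: sum.union_disjoint)
qed

lemma Zcount_sum: "real (Zcount p j n) = (\<Sum>i\<in>{1..n}. if tdeg p i n = j then 1 else 0)"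
  unfolding Zcount_def real_of_card by (rule sum.inter_filter) simp

lemma Psi_lower:
  assumes "\<forall>k\<ge>1. fs \<le> f k"
  shows "fs * real m \<le> Psi f p m"
proof -
  have "(\<Sum>u\<in>{1..m}. fs) \<le> (\<Sum>u\<in>{1..m}. f (tdeg p u m))"
    by (rule sum_mono) (use assms tdeg_pos in auto)
  then show ?thesis unfolding Psi_def by (simp add: mult.commute)
qed

lemma det_bound:
  fixes f :: "nat \<Rightarrow> real"
  assumes fs: "fs > 0" "\<forall>k\<ge>1. fs \<le> f k" and C: "\<forall>k\<ge>1. f k \<le> C * real k"
   and KD: "\<forall>d d'. 1 \<le> d \<longrightarrow> d \<le> d' \<longrightarrow> \<bar>f d' - f d\<bar> \<le> dl * real d' + K * (real d' - real d)"
   and dl: "dl \<ge> 0" and K: "K \<ge> 0" and Fj: "\<forall>d\<in>{1..j}. f d \<le> Fj" and j: "1 \<le> j"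
   and m: "1 \<le> m" "m \<le> n"
  shows "\<bar>(\<Sum>i\<in>{1..n}. if tdeg p i n = j then (if i \<le> m then f (tdeg p i m) / Psi f p m else 0) else 0)
          - f j * real (Zcount p j n) / Psi f p n\<bar>
         \<le> (Fj / fs + f j * (K + 2 * C) / fs^2 + f j / fs) * ((real n - real m) / real m) + 2 * f j / fs^2 * dl"
proof -
  define Pm where "Pm = Psi f p m"
  define Pn where "Pn = Psi f p n"
  define S where "S = (\<Sum>i\<in>{1..n}. if tdeg p i n = j then (if i \<le> m then f (tdeg p i m) / Pm else 0) else 0)"
  define U where "U = (\<Sum>i\<in>{1..m}. if tdeg p i n = j then 1 else (0::real))"
  define W where "W = (\<Sum>i\<in>{m+1..n}. if tdeg p i n = j then 1 else (0::real))"
  have f1: "fs \<le> f 1" "f 1 \<le> C" "f 1 \<le> Fj" using fs C Fj j by auto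
  have C0: "C \<ge> 0" using f1 fs by linarith
  have Fj0: "Fj \<ge> 0" using f1 fs by linarith
  have fj1: "fs \<le> f j" using fs j by auto
  have fj0: "f j \<ge> 0" using fj1 fs by linarith
  have Pm: "fs * real m \<le> Pm" unfolding Pm_def by (rule Psi_lower) (use fs in auto)
  have Pn: "fs * real n \<le> Pn" unfolding Pn_def by (rule Psi_lower) (use fs in auto)
  have "fs * real m > 0" using fs m by simp
  then have Pm0: "Pm > 0" using Pm by linarith
  have Z: "real (Zcount p j n) = U + W"
    unfolding Zcount_sum U_def W_def by (rule sum_split_nat) (use m in auto)
  have U0: "0 \<le> U" unfolding U_def by (rule sum_nonneg) auto
  have Um: "U \<le> real m"
  proof -
    have "U \<le> (\<Sum>i\<in>{1..m}. 1)" unfolding U_def by (rule sum_mono) auto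
    then show ?thesis by simp
  qed
  have W0: "0 \<le> W" unfolding W_def by (rule sum_nonneg) auto
  have Wm: "W \<le> real n - real m"
  proof -
    have "W \<le> (\<Sum>i\<in>{m+1..n}. 1)" unfolding W_def by (rule sum_mono) auto
    then show ?thesis using m by simp
  qed
  have S_eq: "S = (\<Sum>i\<in>{1..m}. if tdeg p i n = j then f (tdeg p i m) / Pm else 0)"
  proof -
    have "S = (\<Sum>i\<in>{1..m}. if tdeg p i n = j then (if i \<le> m then f (tdeg p i m) / Pm else 0) else 0)
        + (\<Sum>i\<in>{m+1..n}. if tdeg p i n = j then (if i \<le> m then f (tdeg p i m) / Pm else 0) else 0)"
      unfolding S_def by (rule sum_split_nat) (use m in auto)
    also have "(\<Sum>i\<in>{m+1..n}. if tdeg p i n = j then (if i \<le> m then f (tdeg p i m) / Pm else 0) else 0) = 0"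
      by (rule sum.neutral) auto
    also have "(\<Sum>i\<in>{1..m}. if tdeg p i n = j then (if i \<le> m then f (tdeg p i m) / Pm else 0) else 0)
        = (\<Sum>i\<in>{1..m}. if tdeg p i n = j then f (tdeg p i m) / Pm else 0)"
      by (rule sum.cong) auto
    finally show ?thesis by simp
  qed
  define g where "g i = (if tdeg p i n = j then f (tdeg p i m) - f j else 0)" for i
  have S1eq: "S - f j * U / Pm = (\<Sum>i\<in>{1..m}. g i) / Pm"
  proof -
    have "S = (\<Sum>i\<in>{1..m}. if tdeg p i n = j then f (tdeg p i m) else 0) / Pm"
      unfolding S_eq sum_divide_distrib by (rule sum.cong) auto
    moreover have "f j * U = (\<Sum>i\<in>{1..m}. if tdeg p i n = j then f j else 0)"
      unfolding U_def sum_distrib_left by (rule sum.cong) auto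
    moreover have "(\<Sum>i\<in>{1..m}. if tdeg p i n = j then f (tdeg p i m) else 0)
        - (\<Sum>i\<in>{1..m}. if tdeg p i n = j then f j else 0) = (\<Sum>i\<in>{1..m}. g i)"
      unfolding g_def sum_subtractf[symmetric] by (rule sum.cong) auto
    ultimately show ?thesis by (simp add: diff_divide_distrib[symmetric])
  qed
  have gb: "\<bar>g i\<bar> \<le> Fj * (real (tdeg p i n) - real (tdeg p i m))" if i: "i \<in> {1..m}" for i
  proof (cases "tdeg p i n = j")
    case False
    have "tdeg p i m \<le> tdeg p i n" using tdeg_mono[of i m n p] i m by auto
    then show ?thesis using False Fj0 by (simp add: g_def)
  next
    case True
    have mono: "tdeg p i m \<le> tdeg p i n" using tdeg_mono[of i m n p] i m by auto
    have pos: "1 \<le> tdeg p i m" using tdeg_pos i by auto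
    show ?thesis
    proof (cases "tdeg p i m = j")
      case True2: True
      then show ?thesis using True mono Fj0 by (simp add: g_def)
    next
      case False
      then have lt: "tdeg p i m < tdeg p i n" using mono True by auto
      have a: "f (tdeg p i m) \<le> Fj" "f j \<le> Fj" using Fj pos lt True j by auto
      have b1: "fs \<le> f (tdeg p i m)" using fs pos by auto
      have b: "f (tdeg p i m) > 0" "f j > 0" using b1 fj1 fs by linarith+
      have "\<bar>g i\<bar> \<le> Fj" using a b True by (simp add: g_def)
      also have "\<dots> \<le> Fj * (real (tdeg p i n) - real (tdeg p i m))"
        using lt Fj0 by (simp add: mult_le_cancel_left1)
      finally show ?thesis .
    qed
  qed
  have S1: "\<bar>S - f j * U / Pm\<bar> \<le> Fj * (real n - real m) / Pm"
  proof -
    have "\<bar>\<Sum>i\<in>{1..m}. g i\<bar> \<le> (\<Sum>i\<in>{1..m}. \<bar>g i\<bar>)" by (rule sum_abs)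
    also have "\<dots> \<le> (\<Sum>i\<in>{1..m}. Fj * (real (tdeg p i n) - real (tdeg p i m)))"
      by (rule sum_mono) (rule gb)
    also have "\<dots> = Fj * (\<Sum>i\<in>{1..m}. real (tdeg p i n) - real (tdeg p i m))"
      by (simp add: sum_distrib_left)
    also have "\<dots> \<le> Fj * (real n - real m)"
      using sum_tdeg_diff[of m n p] m Fj0 by (intro mult_left_mono) auto
    finally have "\<bar>\<Sum>i\<in>{1..m}. g i\<bar> \<le> Fj * (real n - real m)" .
    then show ?thesis unfolding S1eq using Pm0 by (simp add: divide_right_mono)
  qed
  have D: "\<bar>Pn - Pm\<bar> \<le> 2 * dl * real n + (K + 2 * C) * (real n - real m)"
  proof -
    define A where "A = (\<Sum>i\<in>{1..m}. f (tdeg p i n) - f (tdeg p i m))"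
    define B where "B = (\<Sum>i\<in>{m+1..n}. f (tdeg p i n))"
    have "Pn = (\<Sum>i\<in>{1..m}. f (tdeg p i n)) + B"
      unfolding Pn_def Psi_def B_def by (rule sum_split_nat) (use m in auto)
    then have eq: "Pn - Pm = A + B" unfolding A_def Pm_def Psi_def by (simp add: sum_subtractf)
    have sd: "(\<Sum>i\<in>{1..m}. real (tdeg p i n)) \<le> 2 * real n"
    proof -
      have "(\<Sum>i\<in>{1..m}. real (tdeg p i n)) \<le> (\<Sum>i\<in>{1..n}. real (tdeg p i n))"
        by (rule sum_mono2) (use m in auto)
      then show ?thesis using sum_tdeg_le[of p n] by linarith
    qed
    have "\<bar>A\<bar> \<le> (\<Sum>i\<in>{1..m}. \<bar>f (tdeg p i n) - f (tdeg p i m)\<bar>)" unfolding A_def by (rule sum_abs)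
    also have "\<dots> \<le> (\<Sum>i\<in>{1..m}. dl * real (tdeg p i n) + K * (real (tdeg p i n) - real (tdeg p i m)))"
    proof (rule sum_mono)
      fix i assume i: "i \<in> {1..m}"
      have "1 \<le> tdeg p i m" "tdeg p i m \<le> tdeg p i n"
        using tdeg_pos tdeg_mono[of i m n p] i m by auto
      then show "\<bar>f (tdeg p i n) - f (tdeg p i m)\<bar> \<le> dl * real (tdeg p i n) + K * (real (tdeg p i n) - real (tdeg p i m))"
        using KD by blast
    qed
    also have "\<dots> = dl * (\<Sum>i\<in>{1..m}. real (tdeg p i n)) + K * (\<Sum>i\<in>{1..m}. real (tdeg p i n) - real (tdeg p i m))"
      by (simp add: sum.distrib sum_distrib_left)
    also have "\<dots> \<le> dl * (2 * real n) + K * (real n - real m)"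
      using sd sum_tdeg_diff[of m n p] m dl K by (intro add_mono mult_left_mono) auto
    finally have Ab: "\<bar>A\<bar> \<le> 2 * dl * real n + K * (real n - real m)" by simp
    have B0: "0 \<le> B" unfolding B_def
    proof (rule sum_nonneg)
      fix i assume "i \<in> {m+1..n}"
      then have "fs \<le> f (tdeg p i n)" using fs tdeg_pos[of i n p] by auto
      then show "0 \<le> f (tdeg p i n)" using fs by linarith
    qed
    have "B \<le> (\<Sum>i\<in>{m+1..n}. C * real (tdeg p i n))"
      unfolding B_def by (rule sum_mono) (use C tdeg_pos in auto)
    also have "\<dots> = C * (\<Sum>i\<in>{m+1..n}. real (tdeg p i n))" by (simp add: sum_distrib_left)
    also have "\<dots> \<le> C * (2 * (real n - real m))"
      using sum_tdeg_new[of m n p] m C0 by (intro mult_left_mono) auto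
    finally have Bb: "B \<le> 2 * C * (real n - real m)" by (simp add: algebra_simps)
    have "\<bar>Pn - Pm\<bar> \<le> \<bar>A\<bar> + \<bar>B\<bar>" unfolding eq by (rule abs_triangle_ineq)
    also have "\<dots> \<le> 2 * dl * real n + K * (real n - real m) + 2 * C * (real n - real m)"
      using Ab Bb B0 by simp
    also have "\<dots> = 2 * dl * real n + (K + 2 * C) * (real n - real m)" by (simp add: algebra_simps)
    finally show ?thesis .
  qed
  have main: "\<bar>S - f j * (U + W) / Pn\<bar> \<le> (Fj / fs + f j * (K + 2 * C) / fs^2 + f j / fs) * ((real n - real m) / real m)
            + 2 * f j / fs^2 * dl"
    by (rule arith_combine[OF fs(1) _ _ Pm Pn U0 Um _ _ S1 D fj0 Fj0 _ dl])
       (use m U0 W0 Wm C0 K in auto)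
  show ?thesis using main unfolding Z[symmetric] S_def Pm_def Pn_def .
qed

lemma f_lower:
  assumes "assumption1 f"
  shows "\<exists>fs>0. \<forall>k\<ge>1. fs \<le> f k"
proof -
  have pos: "\<forall>k\<ge>1. f k > 0" and inf: "(INF k\<in>{1..}. f k) > 0"
    using assms unfolding assumption1_def by auto
  have bdd: "bdd_below (f ` {1..})"
    using pos by (intro bdd_belowI[of _ 0]) (auto simp: less_imp_le)
  have "\<forall>k\<ge>1. (INF k\<in>{1..}. f k) \<le> f k"
    using bdd by (auto intro: cINF_lower)
  then show ?thesis using inf by blast
qed

lemma f_upper:
  assumes "assumption1 f"
  shows "\<exists>C. \<forall>k\<ge>1. f k \<le> C * real k"
  using assms unfolding assumption1_def by auto

lemma f_incr:
  assumes a1: "assumption1 f" and a2: "assumption2 \<beta> \<mu> f" and dl: "dl > 0"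
  shows "\<exists>K\<ge>0. \<forall>d d'. 1 \<le> d \<longrightarrow> d \<le> d' \<longrightarrow> \<bar>f d' - f d\<bar> \<le> dl * real d' + K * (real d' - real d)"
proof -
  have pos: "\<forall>k\<ge>1. f k > 0" using a1 unfolding assumption1_def by auto
  have cases: "(\<exists>\<alpha>>-1. \<forall>k\<ge>1. f k = real k + \<alpha>) \<or>
      (((\<lambda>k. f k / real k) \<longlonglongrightarrow> 0) \<and>
         (\<exists>L. \<forall>j\<ge>1. \<forall>k\<ge>1. \<bar>f j - f k\<bar> \<le> L * \<bar>real j - real k\<bar>)) \<or>
      (((\<lambda>k. f k / real k) \<longlonglongrightarrow> 0) \<and> mono_on {1..} f)"
    using a2 unfolding assumption2_def by blast
  then consider (A) "\<exists>\<alpha>>-1. \<forall>k\<ge>1. f k = real k + \<alpha>"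
    | (B) "\<exists>L. \<forall>j\<ge>1. \<forall>k\<ge>1. \<bar>f j - f k\<bar> \<le> L * \<bar>real j - real k\<bar>"
    | (C) "(\<lambda>k. f k / real k) \<longlonglongrightarrow> 0" "mono_on {1..} f"
    by blast
  then show ?thesis
  proof cases
    case A
    then obtain \<alpha> where al: "\<forall>k\<ge>1. f k = real k + \<alpha>" by blast
    have "\<forall>d d'. 1 \<le> d \<longrightarrow> d \<le> d' \<longrightarrow> \<bar>f d' - f d\<bar> \<le> dl * real d' + 1 * (real d' - real d)"
    proof (intro allI impI)
      fix d d' :: nat assume "1 \<le> d" "d \<le> d'"
      then have "\<bar>f d' - f d\<bar> = real d' - real d" using al by auto
      moreover have "0 \<le> dl * real d'" using dl by simp
      ultimately show "\<bar>f d' - f d\<bar> \<le> dl * real d' + 1 * (real d' - real d)" by simp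
    qed
    then show ?thesis by (intro exI[of _ 1]) auto
  next
    case B
    then obtain L where L: "\<forall>j\<ge>1. \<forall>k\<ge>1. \<bar>f j - f k\<bar> \<le> L * \<bar>real j - real k\<bar>" by blast
    have "\<forall>d d'. 1 \<le> d \<longrightarrow> d \<le> d' \<longrightarrow> \<bar>f d' - f d\<bar> \<le> dl * real d' + \<bar>L\<bar> * (real d' - real d)"
    proof (intro allI impI)
      fix d d' :: nat assume h: "1 \<le> d" "d \<le> d'"
      have "1 \<le> d'" using h by simp
      then have "\<bar>f d' - f d\<bar> \<le> L * \<bar>real d' - real d\<bar>" using L h(1) by blast
      also have "\<dots> \<le> \<bar>L\<bar> * (real d' - real d)" using h by (simp add: mult_right_mono)
      finally show "\<bar>f d' - f d\<bar> \<le> dl * real d' + \<bar>L\<bar> * (real d' - real d)"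
        using dl by (smt (verit) mult_nonneg_nonneg of_nat_0_le_iff)
    qed
    then show ?thesis by (intro exI[of _ "\<bar>L\<bar>"]) auto
  next
    case C
    from C(1) dl obtain N where N: "\<forall>k\<ge>N. norm (f k / real k - 0) < dl"
      unfolding LIMSEQ_def dist_real_def by (metis real_norm_def)
    define K where "K = (\<Sum>k\<in>{1..N}. f k)"
    have K0: "K \<ge> 0" unfolding K_def using pos by (intro sum_nonneg) (auto simp: less_imp_le)
    have fK: "f k \<le> K" if "1 \<le> k" "k \<le> N" for k
      unfolding K_def using that pos by (intro member_le_sum) (auto simp: less_imp_le)
    have "\<forall>d d'. 1 \<le> d \<longrightarrow> d \<le> d' \<longrightarrow> \<bar>f d' - f d\<bar> \<le> dl * real d' + K * (real d' - real d)"
    proof (intro allI impI)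
      fix d d' :: nat assume h: "1 \<le> d" "d \<le> d'"
      show "\<bar>f d' - f d\<bar> \<le> dl * real d' + K * (real d' - real d)"
      proof (cases "d = d'")
        case True then show ?thesis using dl K0 by simp
      next
        case False
        then have lt: "d < d'" using h by simp
        have "f d \<le> f d'" using C(2) h unfolding mono_on_def by auto
        moreover have "f d > 0" using pos h by auto
        ultimately have ab: "\<bar>f d' - f d\<bar> \<le> f d'" by simp
        have d1: "real d' - real d \<ge> 1" using lt by simp
        show ?thesis
        proof (cases "d' \<ge> N")
          case True
          then have "\<bar>f d' / real d'\<bar> < dl" using N by auto
          moreover have "real d' > 0" using h by simp
          ultimately have "f d' \<le> dl * real d'" by (simp add: abs_less_iff field_simps)
          moreover have "0 \<le> K * (real d' - real d)" using K0 d1 by simp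
          ultimately show ?thesis using ab by linarith
        next
          case False
          then have "f d' \<le> K" using fK h by auto
          also have "K \<le> K * (real d' - real d)" using K0 d1 by (simp add: mult_le_cancel_left1)
          finally show ?thesis using ab dl by (smt (verit) mult_nonneg_nonneg of_nat_0_le_iff)
        qed
      qed
    qed
    then show ?thesis using K0 by blast
  qed
qed

definition attach_m :: "(nat \<Rightarrow> real) \<Rightarrow> (nat \<Rightarrow> nat) \<Rightarrow> nat \<Rightarrow> nat \<Rightarrow> real" where
  "attach_m f p i m = (if 1 \<le> i \<and> i \<le> m then f (tdeg p i m) / (\<Sum>u\<in>{1..m}. f (tdeg p u m)) else 0)"

lemma attach_prob_m: "attach_prob f \<beta> n p i x = attach_m f p i (delay_time \<beta> n x)"
  unfolding attach_prob_def attach_m_def Let_def by simp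

lemma delay_meas: "(\<lambda>x. delay_time \<beta> n x) \<in> measurable borel (count_space UNIV)"
proof -
  have "(\<lambda>x. \<lfloor>real n - real n powr \<beta> * x\<rfloor>) \<in> measurable borel (count_space UNIV)"
    by measurable
  then have "(\<lambda>x. nat (max \<lfloor>real n - real n powr \<beta> * x\<rfloor> 1)) \<in> measurable borel (count_space UNIV)"
    by (rule measurable_compose) simp
  then show ?thesis unfolding delay_time_def floor_plus_def .
qed

lemma delay_fun_meas: "(\<lambda>x. g (delay_time \<beta> n x) :: real) \<in> borel_measurable borel"
  by (rule measurable_compose[OF delay_meas]) simp

lemma delay_fun_meas':
  assumes "sets \<mu> = sets borel"
  shows "(\<lambda>x. g (delay_time \<beta> n x) :: real) \<in> borel_measurable \<mu>"
  using delay_fun_meas measurable_cong_sets[OF assms refl] by blast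

lemma delay_bounds:
  assumes "0 \<le> x" "1 \<le> n"
  shows "1 \<le> delay_time \<beta> n x" "delay_time \<beta> n x \<le> n"
proof -
  have "0 \<le> real n powr \<beta> * x" using assms by simp
  then have "\<lfloor>real n - real n powr \<beta> * x\<rfloor> \<le> \<lfloor>real n\<rfloor>" by (intro floor_mono) simp
  then have "max \<lfloor>real n - real n powr \<beta> * x\<rfloor> 1 \<le> int n" using assms by simp
  then show "delay_time \<beta> n x \<le> n" unfolding delay_time_def floor_plus_def by (simp add: nat_le_iff)
  show "1 \<le> delay_time \<beta> n x" unfolding delay_time_def floor_plus_def by simp
qed

lemma den_pos:
  fixes f :: "nat \<Rightarrow> real"
  assumes fs: "fs > 0" "\<forall>k\<ge>1. fs \<le> f k" and "1 \<le> i" "i \<le> m"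
  shows "f (tdeg p i m) \<le> (\<Sum>u\<in>{1..m}. f (tdeg p u m))" "0 < f (tdeg p i m)"
proof -
  have nn: "\<And>u. u \<in> {1..m} \<Longrightarrow> 0 \<le> f (tdeg p u m)"
  proof -
    fix u assume "u \<in> {1..m}"
    then have "fs \<le> f (tdeg p u m)" using fs tdeg_pos[of u m p] by auto
    then show "0 \<le> f (tdeg p u m)" using fs by linarith
  qed
  show "f (tdeg p i m) \<le> (\<Sum>u\<in>{1..m}. f (tdeg p u m))"
    by (rule member_le_sum[of i "{1..m}" "\<lambda>u. f (tdeg p u m)"]) (use assms nn in auto)
  have "fs \<le> f (tdeg p i m)" using fs tdeg_pos[of i m p] assms by auto
  then show "0 < f (tdeg p i m)" using fs by linarith
qed

lemma attach_m_bounds: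
  assumes fs: "fs > 0" "\<forall>k\<ge>1. fs \<le> f k"
  shows "0 \<le> attach_m f p i m" "attach_m f p i m \<le> 1"
proof -
  show "0 \<le> attach_m f p i m"
    using den_pos[OF fs, of i m p] unfolding attach_m_def by auto
  show "attach_m f p i m \<le> 1"
    using den_pos[OF fs, of i m p] unfolding attach_m_def by auto
qed

lemma attach_sum_eq1:
  assumes fs: "fs > 0" "\<forall>k\<ge>1. fs \<le> f k" and m: "1 \<le> m" "m \<le> n"
  shows "(\<Sum>i\<in>{1..n}. attach_m f p i m) = 1"
proof -
  define Den where "Den = (\<Sum>u\<in>{1..m}. f (tdeg p u m))"
  have Den: "Den > 0" using den_pos[OF fs, of 1 m p] m unfolding Den_def by linarith
  have "(\<Sum>i\<in>{1..n}. attach_m f p i m) = (\<Sum>i\<in>{1..m}. attach_m f p i m) + (\<Sum>i\<in>{m+1..n}. attach_m f p i m)"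
    by (rule sum_split_nat) (use m in auto)
  also have "(\<Sum>i\<in>{m+1..n}. attach_m f p i m) = 0"
    by (rule sum.neutral) (auto simp: attach_m_def)
  also have "(\<Sum>i\<in>{1..m}. attach_m f p i m) = (\<Sum>i\<in>{1..m}. f (tdeg p i m) / Den)"
    by (rule sum.cong) (auto simp: attach_m_def Den_def)
  also have "\<dots> = Den / Den" unfolding sum_divide_distrib[symmetric] Den_def ..
  finally show ?thesis using Den by simp
qed

definition Efun :: "(nat \<Rightarrow> real) \<Rightarrow> real \<Rightarrow> nat \<Rightarrow> (nat \<Rightarrow> nat) \<Rightarrow> nat \<Rightarrow> real \<Rightarrow> real" where
  "Efun f \<beta> n p j x = (\<Sum>i\<in>{1..n}. if tdeg p i n = j then attach_prob f \<beta> n p i x else 0)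
      - f j * real (Zcount p j n) / Psi f p n"

lemma Efun_m: "Efun f \<beta> n p j x = (\<lambda>m. (\<Sum>i\<in>{1..n}. if tdeg p i n = j then attach_m f p i m else 0)
      - f j * real (Zcount p j n) / Psi f p n) (delay_time \<beta> n x)"
  unfolding Efun_def attach_prob_m by simp

lemma Efun_meas: "sets \<mu> = sets borel \<Longrightarrow> (\<lambda>x. Efun f \<beta> n p j x) \<in> borel_measurable \<mu>"
  unfolding Efun_m by (rule delay_fun_meas')

lemma Zcount_le: "Zcount p j n \<le> n"
proof -
  have "Zcount p j n \<le> card {1..n}" unfolding Zcount_def by (rule card_mono) auto
  then show ?thesis by simp
qed

lemma Efun_crude:
  assumes fs: "fs > 0" "\<forall>k\<ge>1. fs \<le> f k" and j: "1 \<le> j" and x: "0 \<le> x" and n: "1 \<le> n"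
  shows "\<bar>Efun f \<beta> n p j x\<bar> \<le> 1 + f j / fs"
proof -
  define m where "m = delay_time \<beta> n x"
  have m: "1 \<le> m" "m \<le> n" using delay_bounds[OF x n] unfolding m_def by auto
  define S where "S = (\<Sum>i\<in>{1..n}. if tdeg p i n = j then attach_m f p i m else 0)"
  have S0: "0 \<le> S" unfolding S_def using attach_m_bounds[OF fs] by (intro sum_nonneg) auto
  have "S \<le> (\<Sum>i\<in>{1..n}. attach_m f p i m)" unfolding S_def using attach_m_bounds[OF fs]
    by (intro sum_mono) auto
  then have S1: "S \<le> 1" using attach_sum_eq1[OF fs m] by simp
  have fj: "fs \<le> f j" using fs j by auto
  have Pn: "fs * real n \<le> Psi f p n" by (rule Psi_lower) (use fs in auto)
  have "fs * real n > 0" using fs n by simp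
  then have Pn0: "Psi f p n > 0" using Pn by linarith
  have Z: "real (Zcount p j n) \<le> real n" using Zcount_le by simp
  have T0: "0 \<le> f j * real (Zcount p j n) / Psi f p n" using fj fs Pn0 by simp
  have "f j * real (Zcount p j n) / Psi f p n \<le> f j * real n / (fs * real n)"
  proof (rule frac_le)
    show "0 \<le> f j * real n" using fj fs by simp
    show "f j * real (Zcount p j n) \<le> f j * real n" using Z fj fs by (intro mult_left_mono) auto
    show "0 < fs * real n" using fs n by simp
  qed (fact Pn)
  also have "\<dots> = f j / fs" using n fs by simp
  finally have T1: "f j * real (Zcount p j n) / Psi f p n \<le> f j / fs" .
  have "Efun f \<beta> n p j x = S - f j * real (Zcount p j n) / Psi f p n"
    unfolding Efun_m S_def m_def by simp
  then show ?thesis using S0 S1 T0 T1 by (simp add: abs_le_iff)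
qed

lemma Efun_fine:
  fixes f :: "nat \<Rightarrow> real"
  assumes fs: "fs > 0" "\<forall>k\<ge>1. fs \<le> f k" and C: "\<forall>k\<ge>1. f k \<le> C * real k"
   and KD: "\<forall>d d'. 1 \<le> d \<longrightarrow> d \<le> d' \<longrightarrow> \<bar>f d' - f d\<bar> \<le> dl * real d' + K * (real d' - real d)"
   and dl: "dl \<ge> 0" and K: "K \<ge> 0" and Fj: "\<forall>d\<in>{1..j}. f d \<le> Fj" and j: "1 \<le> j"
   and x: "0 \<le> x" and n: "1 \<le> n"
  shows "\<bar>Efun f \<beta> n p j x\<bar> \<le> (Fj / fs + f j * (K + 2 * C) / fs^2 + f j / fs)
      * ((real n - real (delay_time \<beta> n x)) / real (delay_time \<beta> n x)) + 2 * f j / fs^2 * dl"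
proof -
  define m where "m = delay_time \<beta> n x"
  have m: "1 \<le> m" "m \<le> n" using delay_bounds[OF x n] unfolding m_def by auto
  have "Efun f \<beta> n p j x = (\<Sum>i\<in>{1..n}. if tdeg p i n = j then (if i \<le> m then f (tdeg p i m) / Psi f p m else 0) else 0)
          - f j * real (Zcount p j n) / Psi f p n"
    unfolding Efun_m m_def[symmetric]
    by (intro arg_cong2[where f=minus] refl sum.cong) (auto simp: attach_m_def Psi_def)
  then show ?thesis using det_bound[OF fs C KD dl K Fj j m, of p] unfolding m_def by simp
qed

lemma delay_ratio_lim:
  assumes b: "0 \<le> \<beta>" "\<beta> < 1" and x: "0 \<le> x"
  shows "(\<lambda>n. (real n - real (delay_time \<beta> n x)) / real (delay_time \<beta> n x)) \<longlonglongrightarrow> 0"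
proof -
  define q where "q n = (real n powr \<beta> * x + 1) / real n" for n :: nat
  have p1: "(\<lambda>n. real n powr (\<beta> - 1)) \<longlonglongrightarrow> 0"
    using b by (intro tendsto_neg_powr filterlim_real_sequentially) auto
  have "(\<lambda>n. x * real n powr (\<beta> - 1) + 1 / real n) \<longlonglongrightarrow> x * 0 + 0"
    by (intro tendsto_intros p1)
  moreover have "\<forall>\<^sub>F n in sequentially. x * real n powr (\<beta> - 1) + 1 / real n = q n"
  proof (rule eventually_sequentiallyI[of 1])
    fix n :: nat assume "1 \<le> n"
    then have "real n powr (\<beta> - 1) = real n powr \<beta> / real n"
      by (simp add: powr_diff)
    then show "x * real n powr (\<beta> - 1) + 1 / real n = q n"
      unfolding q_def by (simp add: add_divide_distrib)
  qed
  ultimately have q0: "q \<longlonglongrightarrow> 0" by (simp add: tendsto_cong)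
  then have ev1: "\<forall>\<^sub>F n in sequentially. q n < 1/2"
    by (rule order_tendstoD) simp
  define r where "r n = (real n - real (delay_time \<beta> n x)) / real (delay_time \<beta> n x)" for n
  have ev2: "\<forall>\<^sub>F n in sequentially. 0 \<le> r n \<and> r n \<le> 2 * q n"
    using ev1 eventually_ge_at_top[of 1]
  proof eventually_elim
    case (elim n)
    have n0: "real n > 0" using elim by simp
    define y where "y = real n - real n powr \<beta> * x"
    have qn: "q n * real n = real n powr \<beta> * x + 1" unfolding q_def using n0 by simp
    have q_nn: "0 \<le> q n" unfolding q_def using x by simp
    have y1: "y - 1 = real n - q n * real n" unfolding y_def qn by simp
    have "q n * real n < real n / 2" using elim(1) n0 by (simp add: mult_strict_right_mono)
    then have y1': "y - 1 > real n / 2" using y1 by simp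
    then have fy: "1 \<le> \<lfloor>y\<rfloor>" using n0 by (simp add: le_floor_iff)
    define m where "m = delay_time \<beta> n x"
    have mdef: "real m = real_of_int \<lfloor>y\<rfloor>"
      unfolding m_def delay_time_def floor_plus_def y_def[symmetric] using fy by simp
    have m_gt: "real m > y - 1" unfolding mdef by simp
    have m_le: "m \<le> n" unfolding m_def by (rule delay_bounds(2)[OF x elim(2)])
    have m_pos: "real m > 0" using m_gt y1' n0 by linarith
    have r_def': "r n = (real n - real m) / real m" unfolding r_def m_def ..
    have "0 \<le> r n" unfolding r_def' using m_le m_pos by simp
    moreover have "r n \<le> 2 * q n"
    proof -
      have a: "real n - real m < q n * real n" using m_gt y1 by linarith
      have "real n < 2 * real m" using m_gt y1' by linarith
      then have "q n * real n \<le> q n * (2 * real m)" using q_nn by (intro mult_left_mono) auto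
      then have "real n - real m \<le> 2 * q n * real m" using a by simp
      then show ?thesis unfolding r_def' using m_pos by (simp add: pos_divide_le_eq)
    qed
    ultimately show ?case by simp
  qed
  have "(\<lambda>n. 2 * q n) \<longlonglongrightarrow> 2 * 0" by (intro tendsto_intros q0)
  then have "r \<longlonglongrightarrow> 0"
    using ev2 by (intro tendsto_sandwich[of "\<lambda>_. 0" r sequentially "\<lambda>n. 2 * q n"])
       (auto elim: eventually_mono)
  then show ?thesis unfolding r_def .
qed

lemma conv_E:
  fixes f :: "nat \<Rightarrow> real" and \<mu> :: "real measure"
  assumes mu: "prob_space \<mu>" "sets \<mu> = sets borel" "AE x in \<mu>. 0 \<le> x"
    and b: "0 \<le> \<beta>" "\<beta> < 1"
    and a1: "assumption1 f" and a2: "assumption2 \<beta> \<mu> f" and j: "1 \<le> j"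
    and e: "e > 0"
  shows "\<exists>N. \<forall>n\<ge>N. \<forall>p. (\<integral>x. \<bar>Efun f \<beta> n p j x\<bar> \<partial>\<mu>) \<le> e"
proof -
  interpret prob_space \<mu> by (rule mu(1))
  obtain fs where fs: "fs > 0" "\<forall>k\<ge>1. fs \<le> f k" using f_lower[OF a1] by blast
  obtain C where C: "\<forall>k\<ge>1. f k \<le> C * real k" using f_upper[OF a1] by blast
  define Fj where "Fj = (\<Sum>d\<in>{1..j}. f d)"
  have Fj: "\<forall>d\<in>{1..j}. f d \<le> Fj"
  proof
    fix d assume d: "d \<in> {1..j}"
    have nn: "\<And>u. u \<in> {1..j} \<Longrightarrow> 0 \<le> f u"
    proof -
      fix u assume "u \<in> {1..j}" then have "fs \<le> f u" using fs by auto
      then show "0 \<le> f u" using fs by linarith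
    qed
    show "f d \<le> Fj" unfolding Fj_def by (rule member_le_sum) (use d nn in auto)
  qed
  have fj: "fs \<le> f j" using fs j by auto
  have Fj0: "f j \<le> Fj" using Fj j by auto
  define B where "B = 2 * f j / fs^2"
  have B0: "B \<ge> 0" unfolding B_def using fj fs by simp
  define dl where "dl = e / (2 * (B + 1))"
  have dl0: "dl > 0" unfolding dl_def using e B0 by simp
  have Bdl: "B * dl \<le> e / 2"
  proof -
    have "B * dl = e / 2 * (B / (B + 1))" unfolding dl_def using B0 by (simp add: field_simps)
    also have "\<dots> \<le> e / 2 * 1" using B0 e by (intro mult_left_mono) auto
    finally show ?thesis by simp
  qed
  obtain K where K: "K \<ge> 0" "\<forall>d d'. 1 \<le> d \<longrightarrow> d \<le> d' \<longrightarrow> \<bar>f d' - f d\<bar> \<le> dl * real d' + K * (real d' - real d)"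
    using f_incr[OF a1 a2 dl0] by blast
  have C0: "C \<ge> 0"
  proof -
    have "fs \<le> f 1" "f 1 \<le> C" using fs C by auto
    then show ?thesis using fs by linarith
  qed
  define A where "A = Fj / fs + f j * (K + 2 * C) / fs^2 + f j / fs"
  have A0: "A \<ge> 0" unfolding A_def using fj fs Fj0 K C0 by (intro add_nonneg_nonneg) auto
  define D where "D = 1 + f j / fs"
  have D0: "D \<ge> 0" unfolding D_def using fj fs by simp
  define r where "r n x = (real n - real (delay_time \<beta> n x)) / real (delay_time \<beta> n x)" for n x
  define psi where "psi n x = min D (A * r n x)" for n x
  have psi_meas: "\<And>n. psi n \<in> borel_measurable \<mu>"
  proof -
    fix n
    have "psi n = (\<lambda>x. (\<lambda>m. min D (A * ((real n - real m) / real m))) (delay_time \<beta> n x))"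
      unfolding psi_def r_def by simp
    then show "psi n \<in> borel_measurable \<mu>" using delay_fun_meas'[OF mu(2)] by simp
  qed
  have r_nn: "0 \<le> r n x" if "0 \<le> x" "1 \<le> n" for n x
    using delay_bounds[OF that, of \<beta>] unfolding r_def by simp
  have lim: "(\<lambda>n. integral\<^sup>L \<mu> (psi n)) \<longlonglongrightarrow> integral\<^sup>L \<mu> (\<lambda>x. 0)"
  proof (rule integral_dominated_convergence[where w="\<lambda>_. D + A"])
    show "(\<lambda>x. 0::real) \<in> borel_measurable \<mu>" by simp
    show "\<And>n. psi n \<in> borel_measurable \<mu>" by (rule psi_meas)
    show "integrable \<mu> (\<lambda>_. D + A)" by simp
    show "AE x in \<mu>. (\<lambda>n. psi n x) \<longlonglongrightarrow> 0"
      using mu(3)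
    proof eventually_elim
      case (elim x)
      have "(\<lambda>n. r n x) \<longlonglongrightarrow> 0" unfolding r_def by (rule delay_ratio_lim[OF b elim])
      then have "(\<lambda>n. min D (A * r n x)) \<longlonglongrightarrow> min D (A * 0)" by (intro tendsto_intros)
      moreover have "min D (A * 0) = 0" using D0 by (simp add: min_absorb2)
      ultimately show ?case unfolding psi_def by simp
    qed
    show "AE x in \<mu>. norm (psi n x) \<le> D + A" for n
    proof (rule AE_I2)
      fix x
      have rm: "r n x \<ge> -1"
      proof (cases "delay_time \<beta> n x = 0")
        case True then show ?thesis unfolding r_def by simp
      next
        case False
        then have "real (delay_time \<beta> n x) > 0" by simp
        then show ?thesis unfolding r_def by (simp add: le_divide_eq)
      qed
      have "A * r n x \<ge> A * (-1)" using rm A0 by (intro mult_left_mono) auto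
      then show "norm (psi n x) \<le> D + A" unfolding psi_def using D0 A0 by (auto simp: min_def)
    qed
  qed
  then have "(\<lambda>n. integral\<^sup>L \<mu> (psi n)) \<longlonglongrightarrow> 0" by simp
  then obtain N0 where N0: "\<forall>n\<ge>N0. \<bar>integral\<^sup>L \<mu> (psi n) - 0\<bar> < e / 2"
    using e unfolding LIMSEQ_def dist_real_def by (metis half_gt_zero real_norm_def)
  have "\<forall>n\<ge>max N0 1. \<forall>p. (\<integral>x. \<bar>Efun f \<beta> n p j x\<bar> \<partial>\<mu>) \<le> e"
  proof (intro allI impI)
    fix n p assume n: "max N0 1 \<le> n"
    have n1: "1 \<le> n" using n by simp
    have ps: "integral\<^sup>L \<mu> (psi n) < e / 2" using N0 n by auto
    have int1: "integrable \<mu> (\<lambda>x. \<bar>Efun f \<beta> n p j x\<bar>)"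
    proof (rule integrable_const_bound[where B=D])
      show "AE x in \<mu>. norm \<bar>Efun f \<beta> n p j x\<bar> \<le> D"
        using mu(3) by eventually_elim (use Efun_crude[OF fs j _ n1] in \<open>auto simp: D_def\<close>)
      show "(\<lambda>x. \<bar>Efun f \<beta> n p j x\<bar>) \<in> borel_measurable \<mu>"
        using Efun_meas[OF mu(2)] by measurable
    qed
    have int2: "integrable \<mu> (\<lambda>x. psi n x + B * dl)"
    proof (rule integrable_const_bound[where B="D + B * dl"])
      show "AE x in \<mu>. norm (psi n x + B * dl) \<le> D + B * dl"
        using mu(3)
      proof eventually_elim
        case (elim x)
        have "0 \<le> A * r n x" using A0 r_nn[OF elim n1] by simp
        then have "0 \<le> psi n x" "psi n x \<le> D" unfolding psi_def using D0 by (auto simp: min_def)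
        then show ?case using B0 dl0 by simp
      qed
      show "(\<lambda>x. psi n x + B * dl) \<in> borel_measurable \<mu>" using psi_meas[of n] by measurable
    qed
    have "(\<integral>x. \<bar>Efun f \<beta> n p j x\<bar> \<partial>\<mu>) \<le> (\<integral>x. psi n x + B * dl \<partial>\<mu>)"
    proof (rule integral_mono_AE[OF int1 int2])
      show "AE x in \<mu>. \<bar>Efun f \<beta> n p j x\<bar> \<le> psi n x + B * dl"
        using mu(3)
      proof eventually_elim
        case (elim x)
        have c1: "\<bar>Efun f \<beta> n p j x\<bar> \<le> D" using Efun_crude[OF fs j elim n1] unfolding D_def .
        have c2: "\<bar>Efun f \<beta> n p j x\<bar> \<le> A * r n x + B * dl"
          using Efun_fine[OF fs C K(2) less_imp_le[OF dl0] K(1) Fj j elim n1, of \<beta> p]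
          unfolding A_def B_def r_def by simp
        have bd: "0 \<le> B * dl" using B0 dl0 by simp
        show ?case unfolding psi_def using c1 c2 bd by (auto simp: min_def)
      qed
    qed
    also have "\<dots> = integral\<^sup>L \<mu> (psi n) + B * dl"
    proof -
      have "integrable \<mu> (psi n)"
        using int2 Bochner_Integration.integrable_diff[OF int2 integrable_const[of "B * dl"]] by simp
      then show ?thesis by (simp add: prob_space)
    qed
    also have "\<dots> \<le> e" using ps Bdl by simp
    finally show "(\<integral>x. \<bar>Efun f \<beta> n p j x\<bar> \<partial>\<mu>) \<le> e" .
  qed
  then show ?thesis by blast
qed

lemma meas_par_fun:
  fixes par :: "nat \<Rightarrow> 'a \<Rightarrow> nat" and \<Phi> :: "(nat \<Rightarrow> nat) \<Rightarrow> 'b"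
  assumes L: "finite L" and gen: "\<And>l i. l \<in> L \<Longrightarrow> par l -` {i} \<inter> space N \<in> sets N"
    and resp: "\<And>p q. (\<forall>l\<in>L. p l = q l) \<Longrightarrow> \<Phi> p = \<Phi> q"
  shows "(\<lambda>\<omega>. \<Phi> (\<lambda>l. par l \<omega>)) \<in> measurable N (count_space UNIV)"
proof -
  define A where "A = PiE L (\<lambda>_. UNIV :: nat set)"
  have cA: "countable A" unfolding A_def using L by (intro countable_PiE) auto
  define g where "g \<omega> = restrict (\<lambda>l. par l \<omega>) L" for \<omega>
  have g: "g \<in> measurable N (count_space A)"
    unfolding measurable_count_space_eq_countable[OF cA]
  proof (intro conjI ballI)
    show "g \<in> space N \<rightarrow> A" unfolding g_def A_def by auto
    fix a assume a: "a \<in> A"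
    have eq: "g -` {a} \<inter> space N = space N \<inter> (\<Inter>l\<in>L. par l -` {a l} \<inter> space N)"
    proof (intro set_eqI iffI)
      fix \<omega> assume "\<omega> \<in> g -` {a} \<inter> space N"
      then have "restrict (\<lambda>l. par l \<omega>) L = a" "\<omega> \<in> space N" unfolding g_def by auto
      then show "\<omega> \<in> space N \<inter> (\<Inter>l\<in>L. par l -` {a l} \<inter> space N)"
        by (auto simp: fun_eq_iff split: if_splits)
    next
      fix \<omega> assume w: "\<omega> \<in> space N \<inter> (\<Inter>l\<in>L. par l -` {a l} \<inter> space N)"
      have "restrict (\<lambda>l. par l \<omega>) L = a"
      proof
        fix l show "restrict (\<lambda>l. par l \<omega>) L l = a l"
          using w a unfolding A_def by (cases "l \<in> L") (auto simp: PiE_def extensional_def split: if_splits)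
      qed
      then show "\<omega> \<in> g -` {a} \<inter> space N" using w unfolding g_def by auto
    qed
    show "g -` {a} \<inter> space N \<in> sets N"
    proof (cases "L = {}")
      case True
      then show ?thesis unfolding eq by simp
    next
      case False
      have "(\<Inter>l\<in>L. par l -` {a l} \<inter> space N) \<in> sets N"
        using L False gen by (intro sets.finite_INT) auto
      then show ?thesis unfolding eq by auto
    qed
  qed
  have "(\<lambda>\<omega>. \<Phi> (g \<omega>)) \<in> measurable N (count_space UNIV)"
    by (rule measurable_compose[OF g measurable_count_space])
  moreover have "\<And>\<omega>. \<Phi> (g \<omega>) = \<Phi> (\<lambda>l. par l \<omega>)"
    by (rule resp) (auto simp: g_def)
  ultimately show ?thesis by simp
qed

lemma meas_par_real:
  fixes par :: "nat \<Rightarrow> 'a \<Rightarrow> nat" and \<Phi> :: "(nat \<Rightarrow> nat) \<Rightarrow> real"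
  assumes L: "finite L" and gen: "\<And>l i. l \<in> L \<Longrightarrow> par l -` {i} \<inter> space N \<in> sets N"
    and resp: "\<And>p q. (\<forall>l\<in>L. p l = q l) \<Longrightarrow> \<Phi> p = \<Phi> q"
  shows "(\<lambda>\<omega>. \<Phi> (\<lambda>l. par l \<omega>)) \<in> borel_measurable N"
  by (rule measurable_compose[OF meas_par_fun[OF L gen resp] borel_measurable_count_space])

lemma meas_par_set:
  fixes par :: "nat \<Rightarrow> 'a \<Rightarrow> nat" and \<Phi> :: "(nat \<Rightarrow> nat) \<Rightarrow> bool"
  assumes L: "finite L" and gen: "\<And>l i. l \<in> L \<Longrightarrow> par l -` {i} \<inter> space N \<in> sets N"
    and resp: "\<And>p q. (\<forall>l\<in>L. p l = q l) \<Longrightarrow> \<Phi> p = \<Phi> q"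
  shows "{\<omega>\<in>space N. \<Phi> (\<lambda>l. par l \<omega>)} \<in> sets N"
proof -
  have "(\<lambda>\<omega>. \<Phi> (\<lambda>l. par l \<omega>)) -` {True} \<inter> space N \<in> sets N"
    by (rule measurable_sets[OF meas_par_fun[OF L gen resp]]) (auto simp: sets_count_space)
  moreover have "(\<lambda>\<omega>. \<Phi> (\<lambda>l. par l \<omega>)) -` {True} \<inter> space N = {\<omega>\<in>space N. \<Phi> (\<lambda>l. par l \<omega>)}"
    by auto
  ultimately show ?thesis by simp
qed

lemma tdeg_cong:
  assumes "\<forall>l\<in>{2..n}. p l = q l" "1 \<le> i" "j \<le> n"
  shows "tdeg p i j = tdeg q i j"
proof -
  have "{l\<in>{i+1..j}. p l = i} = {l\<in>{i+1..j}. q l = i}" using assms by auto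
  then show ?thesis unfolding tdeg_def by simp
qed

lemma Zcount_cong:
  assumes "\<forall>l\<in>{2..n}. p l = q l" "j \<le> n"
  shows "Zcount p k j = Zcount q k j"
proof -
  have "{u\<in>{1..j}. tdeg p u j = k} = {u\<in>{1..j}. tdeg q u j = k}"
    using tdeg_cong[OF assms(1) _ assms(2)] by auto
  then show ?thesis unfolding Zcount_def by simp
qed

lemma Psi_cong:
  assumes "\<forall>l\<in>{2..n}. p l = q l" "j \<le> n"
  shows "Psi f p j = Psi f q j"
  unfolding Psi_def using tdeg_cong[OF assms(1) _ assms(2)] by (intro sum.cong) auto

lemma attach_m_cong:
  assumes "\<forall>l\<in>{2..n}. p l = q l" "m \<le> n"
  shows "attach_m f p i m = attach_m f q i m"
proof -
  have "(\<Sum>u\<in>{1..m}. f (tdeg p u m)) = (\<Sum>u\<in>{1..m}. f (tdeg q u m))"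
    using tdeg_cong[OF assms(1) _ assms(2)] by (intro sum.cong) auto
  then show ?thesis unfolding attach_m_def using tdeg_cong[OF assms(1) _ assms(2), of i] by auto
qed

lemma dZ:
  assumes k: "1 \<le> k" and n: "1 \<le> n"
  shows "real (Zcount p k (Suc n)) - real (Zcount p k n)
     = (if k = 1 then 1 else 0) + (\<Sum>i\<in>{1..n}. (if p (Suc n) = i then 1 else 0) *
          ((if tdeg p i n = k - 1 then 1 else 0) - (if tdeg p i n = k then 1 else 0)))"
proof -
  have split: "real (Zcount p k (Suc n)) = (\<Sum>i\<in>{1..n}. if tdeg p i (Suc n) = k then 1 else 0)
      + (if k = 1 then 1 else 0)"
  proof -
    have "real (Zcount p k (Suc n)) = (\<Sum>i\<in>{1..Suc n}. if tdeg p i (Suc n) = k then 1 else 0)"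
      by (rule Zcount_sum)
    also have "\<dots> = (\<Sum>i\<in>{1..n}. if tdeg p i (Suc n) = k then 1 else 0)
        + (if tdeg p (Suc n) (Suc n) = k then 1 else 0)"
      by (subst sum_split_nat[of n "Suc n"]) auto
    also have "tdeg p (Suc n) (Suc n) = 1" by (simp add: tdeg_def)
    finally show ?thesis by auto
  qed
  have step: "(if tdeg p i (Suc n) = k then 1 else 0) - (if tdeg p i n = k then 1 else 0)
      = (if p (Suc n) = i then 1 else 0) *
          ((if tdeg p i n = k - 1 then 1 else 0) - (if tdeg p i n = k then 1 else (0::real)))"
    if i: "i \<in> {1..n}" for i
  proof -
    have "{l\<in>{n+1..Suc n}. p l = i} = (if p (Suc n) = i then {Suc n} else {})" by auto
    then have "tdeg p i (Suc n) = tdeg p i n + (if p (Suc n) = i then 1 else 0)"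
      using tdeg_split[of i n "Suc n" p] i by simp
    moreover have "1 \<le> tdeg p i n" using tdeg_pos i by auto
    ultimately show ?thesis using k by auto
  qed
  have "real (Zcount p k (Suc n)) - real (Zcount p k n)
     = (if k = 1 then 1 else 0) + ((\<Sum>i\<in>{1..n}. if tdeg p i (Suc n) = k then 1 else 0)
          - (\<Sum>i\<in>{1..n}. if tdeg p i n = k then 1 else 0))"
    unfolding split Zcount_sum[of p k n] by simp
  also have "(\<Sum>i\<in>{1..n}. if tdeg p i (Suc n) = k then 1 else 0)
          - (\<Sum>i\<in>{1..n}. if tdeg p i n = k then 1 else 0)
     = (\<Sum>i\<in>{1..n}. (if tdeg p i (Suc n) = k then 1 else 0) - (if tdeg p i n = k then 1 else (0::real)))"
    by (simp add: sum_subtractf)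
  also have "\<dots> = (\<Sum>i\<in>{1..n}. (if p (Suc n) = i then 1 else 0) *
          ((if tdeg p i n = k - 1 then 1 else 0) - (if tdeg p i n = k then 1 else 0)))"
    by (rule sum.cong[OF refl step])
  finally show ?thesis .
qed

definition Pint :: "real measure \<Rightarrow> (nat \<Rightarrow> real) \<Rightarrow> real \<Rightarrow> nat \<Rightarrow> (nat \<Rightarrow> nat) \<Rightarrow> nat \<Rightarrow> real" where
  "Pint \<mu> f \<beta> n p i = (\<integral>x. attach_prob f \<beta> n p i x \<partial>\<mu>)"

definition cfun :: "nat \<Rightarrow> nat \<Rightarrow> nat \<Rightarrow> (nat \<Rightarrow> nat) \<Rightarrow> real" where
  "cfun k n i p = (if tdeg p i n = k - 1 then 1 else 0) - (if tdeg p i n = k then 1 else 0)"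

definition Gfun :: "real measure \<Rightarrow> (nat \<Rightarrow> real) \<Rightarrow> real \<Rightarrow> nat \<Rightarrow> nat \<Rightarrow> (nat \<Rightarrow> nat) \<Rightarrow> real" where
  "Gfun \<mu> f \<beta> k n p = (if k = 1 then 1 else 0) + (\<Sum>i\<in>{1..n}. cfun k n i p * Pint \<mu> f \<beta> n p i)"

lemma bounded_integrable:
  fixes h :: "'a \<Rightarrow> real"
  assumes "finite_measure M" "h \<in> borel_measurable M" "\<And>\<omega>. \<omega> \<in> space M \<Longrightarrow> \<bar>h \<omega>\<bar> \<le> B"
  shows "integrable M h"
  by (rule finite_measure.integrable_const_bound[OF assms(1), where B=B]) (use assms in \<open>auto intro: AE_I2\<close>)

lemma cfun_bound: "\<bar>cfun k n i p\<bar> \<le> 1"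
  unfolding cfun_def by auto

lemma cfun_cong: "\<forall>l\<in>{2..n}. p l = q l \<Longrightarrow> 1 \<le> i \<Longrightarrow> cfun k n i p = cfun k n i q"
  unfolding cfun_def using tdeg_cong[of n p q i n] by simp

context
  fixes \<mu> :: "real measure" and \<beta> :: real and f :: "nat \<Rightarrow> real" and fs :: real
  assumes PMU: "prob_space \<mu>" and Smu: "sets \<mu> = sets borel" and AEx: "AE x in \<mu>. 0 \<le> x"
    and fs: "fs > 0" "\<forall>k\<ge>1. fs \<le> f k"
begin

lemma attach_meas: "(\<lambda>x. attach_prob f \<beta> n p i x) \<in> borel_measurable \<mu>"
  unfolding attach_prob_m by (rule delay_fun_meas'[OF Smu])

lemma attach_int: "integrable \<mu> (\<lambda>x. attach_prob f \<beta> n p i x)"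
proof (rule bounded_integrable[where B=1])
  show "finite_measure \<mu>" using PMU by (simp add: prob_space_def)
  show "(\<lambda>x. attach_prob f \<beta> n p i x) \<in> borel_measurable \<mu>" by (rule attach_meas)
  show "\<bar>attach_prob f \<beta> n p i x\<bar> \<le> 1" for x
    unfolding attach_prob_m using attach_m_bounds[OF fs] by simp
qed

lemma Pint_bounds: "0 \<le> Pint \<mu> f \<beta> n p i" "Pint \<mu> f \<beta> n p i \<le> 1"
proof -
  interpret prob_space \<mu> by (rule PMU)
  show "0 \<le> Pint \<mu> f \<beta> n p i"
    unfolding Pint_def attach_prob_m by (rule Bochner_Integration.integral_nonneg) (use attach_m_bounds[OF fs] in auto)
  have "Pint \<mu> f \<beta> n p i \<le> (\<integral>x. 1 \<partial>\<mu>)"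
    unfolding Pint_def
    by (rule integral_mono[OF attach_int]) (auto simp: attach_prob_m attach_m_bounds[OF fs])
  then show "Pint \<mu> f \<beta> n p i \<le> 1" by (simp add: prob_space)
qed

lemma Pint_cong:
  assumes "1 \<le> n" "\<forall>l\<in>{2..n}. p l = q l"
  shows "Pint \<mu> f \<beta> n p i = Pint \<mu> f \<beta> n q i"
  unfolding Pint_def
proof (rule integral_cong_AE[OF attach_meas attach_meas])
  show "AE x in \<mu>. attach_prob f \<beta> n p i x = attach_prob f \<beta> n q i x"
    using AEx
  proof eventually_elim
    case (elim x)
    show ?case unfolding attach_prob_m
      by (rule attach_m_cong[OF assms(2) delay_bounds(2)[OF elim assms(1)]])
  qed
qed

lemma Gfun_bound: "\<bar>Gfun \<mu> f \<beta> k n p\<bar> \<le> 1 + real n"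
proof -
  have "\<bar>\<Sum>i\<in>{1..n}. cfun k n i p * Pint \<mu> f \<beta> n p i\<bar> \<le> (\<Sum>i\<in>{1..n}. \<bar>cfun k n i p * Pint \<mu> f \<beta> n p i\<bar>)"
    (is "\<bar>?S\<bar> \<le> _") by (rule sum_abs)
  also have "\<dots> \<le> (\<Sum>i\<in>{1..n}. 1)"
  proof (rule sum_mono)
    fix i
    have "\<bar>cfun k n i p\<bar> * \<bar>Pint \<mu> f \<beta> n p i\<bar> \<le> 1 * 1"
      using cfun_bound Pint_bounds by (intro mult_mono) auto
    then show "\<bar>cfun k n i p * Pint \<mu> f \<beta> n p i\<bar> \<le> 1" by (simp add: abs_mult)
  qed
  finally have S: "\<bar>?S\<bar> \<le> real n" by simp
  have c: "\<bar>(if k = 1 then 1 else 0)::real\<bar> \<le> 1" by simp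
  show ?thesis unfolding Gfun_def using abs_triangle_ineq[of "(if k = 1 then 1 else 0)::real" ?S] S c by linarith
qed

end


context
  fixes M :: "'a measure" and \<mu> :: "real measure" and \<beta> :: real and f :: "nat \<Rightarrow> real" and fs :: real
    and par :: "nat \<Rightarrow> 'a \<Rightarrow> nat" and xi :: "nat \<Rightarrow> 'a \<Rightarrow> real"
  assumes PM: "prob_space M" and PMU: "prob_space \<mu>" and Smu: "sets \<mu> = sets borel" and AEx: "AE x in \<mu>. 0 \<le> x"
    and fs: "fs > 0" "\<forall>k\<ge>1. fs \<le> f k"
    and proc: "delayed_tree_process M \<beta> \<mu> f par xi"
begin

lemma par_meas: "par l \<in> measurable M (count_space UNIV)"
  using proc unfolding delayed_tree_process_def by auto

lemma xi_meas: "xi l \<in> borel_measurable M"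
  using proc unfolding delayed_tree_process_def by auto

lemma M_gen: "par l -` {i} \<inter> space M \<in> sets M"
  by (rule measurable_sets[OF par_meas]) simp

lemma filt_space: "space (filt M par xi n) = space M"
  unfolding filt_def by (rule space_measure_of_conv)

lemma filt_sets: "sets (filt M par xi n) = sigma_sets (space M)
     ((\<Union>k\<in>{2..n}. {par k -` {i} \<inter> space M | i. True}) \<union>
      (\<Union>k\<in>{2..n}. {xi k -` B \<inter> space M | B. B \<in> sets borel}))"
  unfolding filt_def by (rule sets_measure_of) auto

lemma filt_sub: "subalgebra M (filt M par xi n)"
  unfolding subalgebra_def
proof
  show "space (filt M par xi n) = space M" by (rule filt_space)
  have "(\<Union>k\<in>{2..n}. {par k -` {i} \<inter> space M | i. True}) \<union>
      (\<Union>k\<in>{2..n}. {xi k -` B \<inter> space M | B. B \<in> sets borel}) \<subseteq> sets M"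
    using M_gen measurable_sets[OF xi_meas] by auto
  then show "sets (filt M par xi n) \<subseteq> sets M"
    unfolding filt_sets by (rule sets.sigma_sets_subset)
qed

lemma filt_gen: "l \<in> {2..n} \<Longrightarrow> par l -` {i} \<inter> space (filt M par xi n) \<in> sets (filt M par xi n)"
  unfolding filt_space filt_sets by (rule sigma_sets.Basic) blast

lemma proc_eq:
  assumes "2 \<le> n" "A \<in> sets (filt M par xi n)"
  shows "measure M {\<omega>\<in>space M. \<omega> \<in> A \<and> par (Suc n) \<omega> = i}
        = (\<integral>\<omega>. indicator A \<omega> * Pint \<mu> f \<beta> n (\<lambda>l. par l \<omega>) i \<partial>M)"
proof -
  have "measure M {\<omega>\<in>space M. \<omega> \<in> A \<and> xi (Suc n) \<omega> \<in> UNIV \<and> par (Suc n) \<omega> = i}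
        = (\<integral>\<omega>. indicator A \<omega> *
              (\<integral>x. indicator UNIV x * attach_prob f \<beta> n (\<lambda>l. par l \<omega>) i x \<partial>\<mu>) \<partial>M)"
  proof -
    have all: "\<forall>n\<ge>2. \<forall>A\<in>sets (filt M par xi n). \<forall>B\<in>sets borel. \<forall>i.
        measure M {\<omega>\<in>space M. \<omega> \<in> A \<and> xi (Suc n) \<omega> \<in> B \<and> par (Suc n) \<omega> = i}
        = (\<integral>\<omega>. indicator A \<omega> *
              (\<integral>x. indicator B x * attach_prob f \<beta> n (\<lambda>l. par l \<omega>) i x \<partial>\<mu>) \<partial>M)"
      using proc unfolding delayed_tree_process_def by blast
    have U: "(UNIV::real set) \<in> sets borel" by simp
    show ?thesis using all assms U by blast
  qed
  then show ?thesis unfolding Pint_def by simp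
qed

lemma Pint_measF:
  assumes "1 \<le> n"
  shows "(\<lambda>\<omega>. Pint \<mu> f \<beta> n (\<lambda>l. par l \<omega>) i) \<in> borel_measurable (filt M par xi n)"
  by (rule meas_par_real[where L="{2..n}"]) (auto intro: filt_gen Pint_cong[OF PMU Smu AEx fs assms])

lemma cfun_measF:
  "(\<lambda>\<omega>. cfun k n i (\<lambda>l. par l \<omega>)) \<in> borel_measurable (filt M par xi n)" if "1 \<le> i"
  by (rule meas_par_real[where L="{2..n}"]) (auto intro: filt_gen cfun_cong[OF _ that])

lemma Gfun_measF:
  assumes "1 \<le> n"
  shows "(\<lambda>\<omega>. Gfun \<mu> f \<beta> k n (\<lambda>l. par l \<omega>)) \<in> borel_measurable (filt M par xi n)"
proof (rule meas_par_real[where L="{2..n}"])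
  show "finite {2..n}" by simp
  show "\<And>l i. l \<in> {2..n} \<Longrightarrow> par l -` {i} \<inter> space (filt M par xi n) \<in> sets (filt M par xi n)"
    by (rule filt_gen)
  fix p q :: "nat \<Rightarrow> nat" assume h: "\<forall>l\<in>{2..n}. p l = q l"
  show "Gfun \<mu> f \<beta> k n p = Gfun \<mu> f \<beta> k n q"
    unfolding Gfun_def using cfun_cong[OF h] Pint_cong[OF PMU Smu AEx fs assms h]
    by (intro arg_cong2[where f="(+)"] refl sum.cong) auto
qed

end

context
  fixes M :: "'a measure" and \<mu> :: "real measure" and \<beta> :: real and f :: "nat \<Rightarrow> real" and fs :: real
    and par :: "nat \<Rightarrow> 'a \<Rightarrow> nat" and xi :: "nat \<Rightarrow> 'a \<Rightarrow> real"
  assumes PM: "prob_space M" and PMU: "prob_space \<mu>" and Smu: "sets \<mu> = sets borel" and AEx: "AE x in \<mu>. 0 \<le> x"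
    and fs: "fs > 0" "\<forall>k\<ge>1. fs \<le> f k"
    and proc: "delayed_tree_process M \<beta> \<mu> f par xi"
begin

lemmas ctx = PM PMU Smu AEx fs proc

lemma fmM: "finite_measure M" using PM by (simp add: prob_space_def)

lemma bint: fixes h :: "'a \<Rightarrow> real" shows "h \<in> borel_measurable M \<Longrightarrow> (\<And>\<omega>. \<omega> \<in> space M \<Longrightarrow> \<bar>h \<omega>\<bar> \<le> B) \<Longrightarrow> integrable M h"
  by (rule bounded_integrable[OF fmM])

lemma key_eP:
  assumes n: "2 \<le> n" and A: "A \<in> sets (filt M par xi n)"
  shows "(\<integral>\<omega>. indicator A \<omega> * (if par (Suc n) \<omega> = i then 1 else (0::real)) \<partial>M)
       = (\<integral>\<omega>. indicator A \<omega> * Pint \<mu> f \<beta> n (\<lambda>l. par l \<omega>) i \<partial>M)"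
proof -
  have AM: "A \<in> sets M" using filt_sub[OF ctx] A unfolding subalgebra_def by auto
  define S where "S = {\<omega>\<in>space M. \<omega> \<in> A \<and> par (Suc n) \<omega> = i}"
  have "(\<integral>\<omega>. indicator A \<omega> * (if par (Suc n) \<omega> = i then 1 else (0::real)) \<partial>M) = (\<integral>\<omega>. indicator S \<omega> \<partial>M)"
    by (rule Bochner_Integration.integral_cong) (auto simp: S_def indicator_def)
  also have "\<dots> = measure M (S \<inter> space M)" by simp
  also have "S \<inter> space M = S" unfolding S_def by auto
  also have "measure M S = (\<integral>\<omega>. indicator A \<omega> * Pint \<mu> f \<beta> n (\<lambda>l. par l \<omega>) i \<partial>M)"
    unfolding S_def by (rule proc_eq[OF ctx n A])
  finally show ?thesis .
qed

lemma ind_meas: "A \<in> sets (filt M par xi n) \<Longrightarrow> (\<lambda>\<omega>. indicator A \<omega> :: real) \<in> borel_measurable M"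
  using filt_sub[OF ctx] unfolding subalgebra_def by (intro borel_measurable_indicator) auto

lemma e_meas: "(\<lambda>\<omega>. if par (Suc n) \<omega> = i then 1 else (0::real)) \<in> borel_measurable M"
proof -
  have "(\<lambda>\<omega>. (\<lambda>p. if p (Suc n) = i then 1 else (0::real)) (\<lambda>l. par l \<omega>)) \<in> borel_measurable M"
    by (rule meas_par_real[where L="{Suc n}"]) (auto intro: M_gen[OF ctx])
  then show ?thesis by simp
qed

lemma c_measM: "1 \<le> i \<Longrightarrow> (\<lambda>\<omega>. cfun k n i (\<lambda>l. par l \<omega>)) \<in> borel_measurable M"
  by (rule measurable_from_subalg[OF filt_sub[OF ctx] cfun_measF[OF ctx]])

lemma P_measM: "1 \<le> n \<Longrightarrow> (\<lambda>\<omega>. Pint \<mu> f \<beta> n (\<lambda>l. par l \<omega>) i) \<in> borel_measurable M"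
  by (rule measurable_from_subalg[OF filt_sub[OF ctx] Pint_measF[OF ctx]])

lemma key_i:
  assumes n: "2 \<le> n" and A: "A \<in> sets (filt M par xi n)" and i: "1 \<le> i"
  shows "(\<integral>\<omega>. indicator A \<omega> * ((if par (Suc n) \<omega> = i then 1 else 0) * cfun k n i (\<lambda>l. par l \<omega>)) \<partial>M)
       = (\<integral>\<omega>. indicator A \<omega> * (cfun k n i (\<lambda>l. par l \<omega>) * Pint \<mu> f \<beta> n (\<lambda>l. par l \<omega>) i) \<partial>M)"
proof -
  define F where "F = filt M par xi n"
  have n1: "1 \<le> n" using n by simp
  define D1 where "D1 = {\<omega>\<in>space F. (\<lambda>p. tdeg p i n = k - 1) (\<lambda>l. par l \<omega>)}"
  define D2 where "D2 = {\<omega>\<in>space F. (\<lambda>p. tdeg p i n = k) (\<lambda>l. par l \<omega>)}"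
  have D1: "D1 \<in> sets F" unfolding D1_def F_def
    by (rule meas_par_set[where L="{2..n}"]) (auto intro: filt_gen[OF ctx] dest: tdeg_cong[OF _ i order_refl])
  have D2: "D2 \<in> sets F" unfolding D2_def F_def
    by (rule meas_par_set[where L="{2..n}"]) (auto intro: filt_gen[OF ctx] dest: tdeg_cong[OF _ i order_refl])
  have AF: "A \<in> sets F" using A F_def by simp
  have A1: "A \<inter> D1 \<in> sets (filt M par xi n)" using AF D1 F_def by auto
  have A2: "A \<inter> D2 \<in> sets (filt M par xi n)" using AF D2 F_def by auto
  have spF: "space F = space M" unfolding F_def by (rule filt_space[OF ctx])
  define e where "e \<omega> = (if par (Suc n) \<omega> = i then 1 else (0::real))" for \<omega>
  define P where "P \<omega> = Pint \<mu> f \<beta> n (\<lambda>l. par l \<omega>) i" for \<omega>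
  have ebd: "\<bar>e \<omega>\<bar> \<le> 1" for \<omega> unfolding e_def by simp
  have Pbd: "\<bar>P \<omega>\<bar> \<le> 1" for \<omega> unfolding P_def using Pint_bounds[OF PMU Smu AEx fs] by (simp add: abs_le_iff)
  have em: "e \<in> borel_measurable M" unfolding e_def[abs_def] by (rule e_meas)
  have Pm: "P \<in> borel_measurable M" unfolding P_def[abs_def] by (rule P_measM[OF n1])
  have i1: "integrable M (\<lambda>\<omega>. indicator (A \<inter> D1) \<omega> * e \<omega>)"
    by (rule bint[where B=1]) (use ind_meas[OF A1] em ebd in \<open>auto simp: indicator_def\<close>)
  have i2: "integrable M (\<lambda>\<omega>. indicator (A \<inter> D2) \<omega> * e \<omega>)"
    by (rule bint[where B=1]) (use ind_meas[OF A2] em ebd in \<open>auto simp: indicator_def\<close>)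
  have i3: "integrable M (\<lambda>\<omega>. indicator (A \<inter> D1) \<omega> * P \<omega>)"
    by (rule bint[where B=1]) (use ind_meas[OF A1] Pm Pbd in \<open>auto simp: indicator_def\<close>)
  have i4: "integrable M (\<lambda>\<omega>. indicator (A \<inter> D2) \<omega> * P \<omega>)"
    by (rule bint[where B=1]) (use ind_meas[OF A2] Pm Pbd in \<open>auto simp: indicator_def\<close>)
  have cdec: "cfun k n i (\<lambda>l. par l \<omega>) = indicator D1 \<omega> - indicator D2 \<omega>" if "\<omega> \<in> space M" for \<omega>
    using that spF unfolding cfun_def D1_def D2_def by (simp add: indicator_def)
  have "(\<integral>\<omega>. indicator A \<omega> * ((if par (Suc n) \<omega> = i then 1 else 0) * cfun k n i (\<lambda>l. par l \<omega>)) \<partial>M)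
      = (\<integral>\<omega>. indicator (A \<inter> D1) \<omega> * e \<omega> - indicator (A \<inter> D2) \<omega> * e \<omega> \<partial>M)"
    by (rule Bochner_Integration.integral_cong) (auto simp: cdec e_def indicator_def)
  also have "\<dots> = (\<integral>\<omega>. indicator (A \<inter> D1) \<omega> * e \<omega> \<partial>M) - (\<integral>\<omega>. indicator (A \<inter> D2) \<omega> * e \<omega> \<partial>M)"
    by (rule Bochner_Integration.integral_diff[OF i1 i2])
  also have "\<dots> = (\<integral>\<omega>. indicator (A \<inter> D1) \<omega> * P \<omega> \<partial>M) - (\<integral>\<omega>. indicator (A \<inter> D2) \<omega> * P \<omega> \<partial>M)"
    unfolding e_def P_def using key_eP[OF n A1, of i] key_eP[OF n A2, of i] by simp
  also have "\<dots> = (\<integral>\<omega>. indicator (A \<inter> D1) \<omega> * P \<omega> - indicator (A \<inter> D2) \<omega> * P \<omega> \<partial>M)"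
    by (rule Bochner_Integration.integral_diff[OF i3 i4, symmetric])
  also have "\<dots> = (\<integral>\<omega>. indicator A \<omega> * (cfun k n i (\<lambda>l. par l \<omega>) * Pint \<mu> f \<beta> n (\<lambda>l. par l \<omega>) i) \<partial>M)"
    by (rule Bochner_Integration.integral_cong) (auto simp: cdec P_def indicator_def)
  finally show ?thesis .
qed

lemma condexp:
  assumes n: "2 \<le> n" and k: "1 \<le> k"
  shows "AE \<omega> in M. real_cond_exp M (filt M par xi n)
           (\<lambda>\<omega>. real (Zcount (\<lambda>l. par l \<omega>) k (Suc n)) - real (Zcount (\<lambda>l. par l \<omega>) k n)) \<omega>
         = Gfun \<mu> f \<beta> k n (\<lambda>l. par l \<omega>)"
proof -
  define F where "F = filt M par xi n"
  have n1: "1 \<le> n" using n by simp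
  have fms: "finite_measure_subalgebra M F"
    by (intro finite_measure_subalgebra.intro finite_measure_subalgebra_axioms.intro fmM)
       (simp add: F_def filt_sub[OF ctx])
  interpret sigma_finite_subalgebra M F
    by (rule finite_measure_subalgebra_is_sigma_finite[OF fms])
  define DZ where "DZ \<omega> = real (Zcount (\<lambda>l. par l \<omega>) k (Suc n)) - real (Zcount (\<lambda>l. par l \<omega>) k n)" for \<omega>
  define G where "G \<omega> = Gfun \<mu> f \<beta> k n (\<lambda>l. par l \<omega>)" for \<omega>
  define e where "e i \<omega> = (if par (Suc n) \<omega> = i then 1 else (0::real))" for i \<omega>
  define c where "c i \<omega> = cfun k n i (\<lambda>l. par l \<omega>)" for i \<omega>
  define P where "P i \<omega> = Pint \<mu> f \<beta> n (\<lambda>l. par l \<omega>) i" for i \<omega>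
  define K1 where "K1 = (if k = 1 then 1 else (0::real))"
  have DZm: "DZ \<in> borel_measurable M"
  proof -
    have resp: "real (Zcount p k (Suc n)) - real (Zcount p k n) = real (Zcount q k (Suc n)) - real (Zcount q k n)"
      if h: "\<forall>l\<in>{2..Suc n}. p l = q l" for p q :: "nat \<Rightarrow> nat"
      using Zcount_cong[OF h, of "Suc n" k] Zcount_cong[OF h, of n k] by simp
    have "(\<lambda>\<omega>. (\<lambda>p. real (Zcount p k (Suc n)) - real (Zcount p k n)) (\<lambda>l. par l \<omega>)) \<in> borel_measurable M"
      by (rule meas_par_real[where L="{2..Suc n}" and \<Phi>="\<lambda>p. real (Zcount p k (Suc n)) - real (Zcount p k n)"])
         (auto intro: M_gen[OF ctx] resp)
    then show ?thesis unfolding DZ_def[abs_def] by simp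
  qed
  have DZb: "\<bar>DZ \<omega>\<bar> \<le> real (Suc n)" for \<omega>
  proof -
    have "Zcount (\<lambda>l. par l \<omega>) k (Suc n) \<le> Suc n" "Zcount (\<lambda>l. par l \<omega>) k n \<le> n"
      by (rule Zcount_le)+
    then show ?thesis unfolding DZ_def by (simp add: abs_le_iff)
  qed
  have GmF: "G \<in> borel_measurable F" unfolding G_def[abs_def] F_def by (rule Gfun_measF[OF ctx n1])
  have Gm: "G \<in> borel_measurable M" by (rule measurable_from_subalg[OF subalg GmF])
  have Gb: "\<bar>G \<omega>\<bar> \<le> 1 + real n" for \<omega> unfolding G_def by (rule Gfun_bound[OF PMU Smu AEx fs])
  have DZi: "integrable M DZ" by (rule bint[OF DZm DZb])
  have Gi: "integrable M G" by (rule bint[OF Gm Gb])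
  have DZeq: "DZ \<omega> = K1 + (\<Sum>i\<in>{1..n}. e i \<omega> * c i \<omega>)" for \<omega>
    unfolding DZ_def K1_def e_def c_def cfun_def by (rule dZ[OF k n1])
  have Geq: "G \<omega> = K1 + (\<Sum>i\<in>{1..n}. c i \<omega> * P i \<omega>)" for \<omega>
    unfolding G_def Gfun_def K1_def c_def P_def ..
  have cb: "\<bar>c i \<omega>\<bar> \<le> 1" for i \<omega> unfolding c_def by (rule cfun_bound)
  have Pb: "\<bar>P i \<omega>\<bar> \<le> 1" for i \<omega> unfolding P_def using Pint_bounds[OF PMU Smu AEx fs] by (simp add: abs_le_iff)
  have eb: "\<bar>e i \<omega>\<bar> \<le> 1" for i \<omega> unfolding e_def by simp
  have K1b: "\<bar>K1\<bar> \<le> 1" unfolding K1_def by simp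
  show ?thesis
    unfolding DZ_def[symmetric] G_def[symmetric] F_def[symmetric]
  proof (rule real_cond_exp_charact)
    fix A assume A: "A \<in> sets F"
    have AF: "A \<in> sets (filt M par xi n)" using A F_def by simp
    have Am: "(\<lambda>\<omega>. indicator A \<omega> :: real) \<in> borel_measurable M" by (rule ind_meas[OF AF])
    have indb: "\<bar>indicator A \<omega> :: real\<bar> \<le> 1" for \<omega> by (simp add: indicator_def)
    have int0: "integrable M (\<lambda>\<omega>. indicator A \<omega> * K1)"
      by (rule bint[where B=1]) (use Am K1b in \<open>auto simp: indicator_def\<close>)
    have int1: "integrable M (\<lambda>\<omega>. indicator A \<omega> * (e i \<omega> * c i \<omega>))" if "i \<in> {1..n}" for i
    proof (rule bint[where B=1])
      have "e i \<in> borel_measurable M" unfolding e_def[abs_def] by (rule e_meas)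
      moreover have "c i \<in> borel_measurable M" unfolding c_def[abs_def] using that by (intro c_measM) auto
      ultimately show "(\<lambda>\<omega>. indicator A \<omega> * (e i \<omega> * c i \<omega>)) \<in> borel_measurable M" using Am by measurable
      fix \<omega>
      have "\<bar>indicator A \<omega> :: real\<bar> * (\<bar>e i \<omega>\<bar> * \<bar>c i \<omega>\<bar>) \<le> 1 * (1 * 1)"
        using indb eb cb by (intro mult_mono) auto
      then show "\<bar>indicator A \<omega> * (e i \<omega> * c i \<omega>)\<bar> \<le> 1" by (simp add: abs_mult)
    qed
    have int2: "integrable M (\<lambda>\<omega>. indicator A \<omega> * (c i \<omega> * P i \<omega>))" if "i \<in> {1..n}" for i
    proof (rule bint[where B=1])
      have "P i \<in> borel_measurable M" unfolding P_def[abs_def] by (rule P_measM[OF n1])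
      moreover have "c i \<in> borel_measurable M" unfolding c_def[abs_def] using that by (intro c_measM) auto
      ultimately show "(\<lambda>\<omega>. indicator A \<omega> * (c i \<omega> * P i \<omega>)) \<in> borel_measurable M" using Am by measurable
      fix \<omega>
      have "\<bar>indicator A \<omega> :: real\<bar> * (\<bar>c i \<omega>\<bar> * \<bar>P i \<omega>\<bar>) \<le> 1 * (1 * 1)"
        using indb Pb cb by (intro mult_mono) auto
      then show "\<bar>indicator A \<omega> * (c i \<omega> * P i \<omega>)\<bar> \<le> 1" by (simp add: abs_mult)
    qed
    have "(\<integral>\<omega>\<in>A. DZ \<omega> \<partial>M) = (\<integral>\<omega>. indicator A \<omega> * K1 + (\<Sum>i\<in>{1..n}. indicator A \<omega> * (e i \<omega> * c i \<omega>)) \<partial>M)"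
      unfolding set_lebesgue_integral_def DZeq by (simp add: sum_distrib_left distrib_left)
    also have "\<dots> = (\<integral>\<omega>. indicator A \<omega> * K1 \<partial>M) + (\<integral>\<omega>. (\<Sum>i\<in>{1..n}. indicator A \<omega> * (e i \<omega> * c i \<omega>)) \<partial>M)"
      by (rule Bochner_Integration.integral_add[OF int0 Bochner_Integration.integrable_sum[OF int1]])
    also have "(\<integral>\<omega>. (\<Sum>i\<in>{1..n}. indicator A \<omega> * (e i \<omega> * c i \<omega>)) \<partial>M)
        = (\<Sum>i\<in>{1..n}. \<integral>\<omega>. indicator A \<omega> * (e i \<omega> * c i \<omega>) \<partial>M)"
      by (rule Bochner_Integration.integral_sum[OF int1])
    also have "(\<Sum>i\<in>{1..n}. \<integral>\<omega>. indicator A \<omega> * (e i \<omega> * c i \<omega>) \<partial>M)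
        = (\<Sum>i\<in>{1..n}. \<integral>\<omega>. indicator A \<omega> * (c i \<omega> * P i \<omega>) \<partial>M)"
      by (rule sum.cong[OF refl]) (unfold e_def c_def P_def, rule key_i[OF n AF], simp)
    also have "\<dots> = (\<integral>\<omega>. (\<Sum>i\<in>{1..n}. indicator A \<omega> * (c i \<omega> * P i \<omega>)) \<partial>M)"
      by (rule Bochner_Integration.integral_sum[OF int2, symmetric])
    also have "(\<integral>\<omega>. indicator A \<omega> * K1 \<partial>M) + \<dots> = (\<integral>\<omega>. indicator A \<omega> * K1 + (\<Sum>i\<in>{1..n}. indicator A \<omega> * (c i \<omega> * P i \<omega>)) \<partial>M)"
      by (rule Bochner_Integration.integral_add[OF int0 Bochner_Integration.integrable_sum[OF int2], symmetric])
    also have "\<dots> = (\<integral>\<omega>\<in>A. G \<omega> \<partial>M)"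
      unfolding set_lebesgue_integral_def Geq by (simp add: sum_distrib_left distrib_left)
    finally show "(\<integral>\<omega>\<in>A. DZ \<omega> \<partial>M) = (\<integral>\<omega>\<in>A. G \<omega> \<partial>M)" .
  qed (fact DZi Gi GmF)+
qed

end

context
  fixes \<mu> :: "real measure" and \<beta> :: real and f :: "nat \<Rightarrow> real" and fs :: real
  assumes PMU: "prob_space \<mu>" and Smu: "sets \<mu> = sets borel" and AEx: "AE x in \<mu>. 0 \<le> x"
    and fs: "fs > 0" "\<forall>k\<ge>1. fs \<le> f k"
begin

lemma intE:
  "(\<integral>x. Efun f \<beta> n p j x \<partial>\<mu>) = (\<Sum>i\<in>{1..n}. (if tdeg p i n = j then 1 else 0) * Pint \<mu> f \<beta> n p i)
      - f j * real (Zcount p j n) / Psi f p n"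
proof -
  interpret prob_space \<mu> by (rule PMU)
  have ai: "\<And>i. integrable \<mu> (\<lambda>x. attach_prob f \<beta> n p i x)" by (rule attach_int[OF PMU Smu AEx fs])
  have eq: "Efun f \<beta> n p j x = (\<Sum>i\<in>{1..n}. (if tdeg p i n = j then 1 else 0) * attach_prob f \<beta> n p i x)
      - f j * real (Zcount p j n) / Psi f p n" for x
    unfolding Efun_def by (intro arg_cong2[where f=minus] refl sum.cong) auto
  have "(\<integral>x. Efun f \<beta> n p j x \<partial>\<mu>) = (\<integral>x. (\<Sum>i\<in>{1..n}. (if tdeg p i n = j then 1 else 0) * attach_prob f \<beta> n p i x) \<partial>\<mu>)
      - (\<integral>x. f j * real (Zcount p j n) / Psi f p n \<partial>\<mu>)"
    unfolding eq by (rule Bochner_Integration.integral_diff) (use ai in auto)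
  also have "(\<integral>x. (\<Sum>i\<in>{1..n}. (if tdeg p i n = j then 1 else 0) * attach_prob f \<beta> n p i x) \<partial>\<mu>)
      = (\<Sum>i\<in>{1..n}. (\<integral>x. (if tdeg p i n = j then 1 else 0) * attach_prob f \<beta> n p i x \<partial>\<mu>))"
    by (rule Bochner_Integration.integral_sum) (use ai in auto)
  also have "\<dots> = (\<Sum>i\<in>{1..n}. (if tdeg p i n = j then 1 else 0) * Pint \<mu> f \<beta> n p i)"
    unfolding Pint_def by (intro sum.cong refl) simp
  finally show ?thesis by (simp add: prob_space)
qed

lemma Gfun_E:
  assumes k: "1 \<le> k"
  shows "Gfun \<mu> f \<beta> k n p - (if k = 1 then 1 else f (k - 1) * real (Zcount p (k - 1) n) / Psi f p n)
          + f k * real (Zcount p k n) / Psi f p n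
       = (if k = 1 then 0 else (\<integral>x. Efun f \<beta> n p (k - 1) x \<partial>\<mu>)) - (\<integral>x. Efun f \<beta> n p k x \<partial>\<mu>)"
proof -
  define Q where "Q j = (\<Sum>i\<in>{1..n}. (if tdeg p i n = j then 1 else 0) * Pint \<mu> f \<beta> n p i)" for j
  have G: "Gfun \<mu> f \<beta> k n p = (if k = 1 then 1 else 0) + (Q (k - 1) - Q k)"
    unfolding Gfun_def Q_def cfun_def sum_subtractf[symmetric] by (simp add: left_diff_distrib)
  have Q0: "Q 0 = 0" unfolding Q_def by (rule sum.neutral) (auto simp: tdeg_def)
  show ?thesis
  proof (cases "k = 1")
    case True
    then show ?thesis unfolding G intE Q_def[symmetric] using Q0 by simp
  next
    case False
    then show ?thesis unfolding G intE Q_def[symmetric] by simp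
  qed
qed

lemma pi_det_bound:
  assumes k: "1 \<le> k"
  shows "\<bar>Gfun \<mu> f \<beta> k n p - (if k = 1 then 1 else f (k - 1) * real (Zcount p (k - 1) n) / Psi f p n)
          + f k * real (Zcount p k n) / Psi f p n\<bar>
       \<le> (if k = 1 then 0 else (\<integral>x. \<bar>Efun f \<beta> n p (k - 1) x\<bar> \<partial>\<mu>)) + (\<integral>x. \<bar>Efun f \<beta> n p k x\<bar> \<partial>\<mu>)"
proof -
  have b: "\<bar>\<integral>x. Efun f \<beta> n p j x \<partial>\<mu>\<bar> \<le> (\<integral>x. \<bar>Efun f \<beta> n p j x\<bar> \<partial>\<mu>)" for j
    using integral_norm_bound[of \<mu> "\<lambda>x. Efun f \<beta> n p j x"] by simp
  show ?thesis unfolding Gfun_E[OF k]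
    using b[of k] b[of "k - 1"] by (auto simp: abs_le_iff)
qed

end

theorem mainTheorem7:
  fixes M :: "'a measure" and \<mu> :: "real measure" and \<beta> :: real
    and f :: "nat \<Rightarrow> real" and par :: "nat \<Rightarrow> 'a \<Rightarrow> nat" and xi :: "nat \<Rightarrow> 'a \<Rightarrow> real"
  assumes "prob_space M"
    and "prob_space \<mu>" and "sets \<mu> = sets borel" and "AE x in \<mu>. x \<ge> 0"
    and "0 \<le> \<beta>" and "\<beta> < 1"
    and "assumption1 f"
    and "assumption2 \<beta> \<mu> f"
    and "delayed_tree_process M \<beta> \<mu> f par xi"
    and "k \<ge> 1"
  shows "(AE \<omega> in M. (\<lambda>n. pi_k M f par xi k n \<omega>) \<longlonglongrightarrow> 0)
         \<and> (\<lambda>n. \<integral>\<omega>. \<bar>pi_k M f par xi k n \<omega>\<bar> \<partial>M) \<longlonglongrightarrow> 0"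
proof -
  have k: "1 \<le> k" using assms(10) by simp
  have AEx: "AE x in \<mu>. 0 \<le> x" using assms(4) by simp
  obtain fs where fs: "fs > 0" "\<forall>k\<ge>1. fs \<le> f k" using f_lower[OF assms(7)] by blast
  interpret PMi: prob_space M by (rule assms(1))
  define Bd where "Bd n \<omega> = (if k = 1 then 0 else (\<integral>x. \<bar>Efun f \<beta> n (\<lambda>l. par l \<omega>) (k - 1) x\<bar> \<partial>\<mu>))
      + (\<integral>x. \<bar>Efun f \<beta> n (\<lambda>l. par l \<omega>) k x\<bar> \<partial>\<mu>)" for n \<omega>
  have AEn: "AE \<omega> in M. 2 \<le> n \<longrightarrow> \<bar>pi_k M f par xi k n \<omega>\<bar> \<le> Bd n \<omega>" for n
  proof (cases "2 \<le> n")
    case False then show ?thesis by simp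
  next
    case True
    show ?thesis
      using condexp[OF assms(1,2,3) AEx fs assms(9) True k]
    proof eventually_elim
      case (elim \<omega>)
      show ?case
        unfolding pi_k_def elim Bd_def
        by (intro impI pi_det_bound[OF assms(2,3) AEx fs k])
    qed
  qed
  have AEb: "AE \<omega> in M. \<forall>n. 2 \<le> n \<longrightarrow> \<bar>pi_k M f par xi k n \<omega>\<bar> \<le> Bd n \<omega>"
    using AEn by (simp add: AE_all_countable)
  have unif: "\<exists>N. \<forall>n\<ge>N. \<forall>\<omega>. Bd n \<omega> \<le> e" if e: "e > 0" for e
  proof -
    have e2: "e / 2 > 0" using e by simp
    obtain N1 where N1: "\<forall>n\<ge>N1. \<forall>p. (\<integral>x. \<bar>Efun f \<beta> n p k x\<bar> \<partial>\<mu>) \<le> e / 2"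
      using conv_E[OF assms(2,3) AEx assms(5,6,7,8) k e2] by blast
    obtain N2 where N2: "k \<noteq> 1 \<longrightarrow> (\<forall>n\<ge>N2. \<forall>p. (\<integral>x. \<bar>Efun f \<beta> n p (k - 1) x\<bar> \<partial>\<mu>) \<le> e / 2)"
    proof (cases "k = 1")
      case True then show ?thesis using that by blast
    next
      case False
      then have "1 \<le> k - 1" using k by simp
      then show ?thesis using conv_E[OF assms(2,3) AEx assms(5,6,7,8) _ e2, of "k - 1"] that by blast
    qed
    have "\<forall>n\<ge>max N1 N2. \<forall>\<omega>. Bd n \<omega> \<le> e"
    proof (intro allI impI)
      fix n \<omega> assume n: "max N1 N2 \<le> n"
      have a: "(\<integral>x. \<bar>Efun f \<beta> n (\<lambda>l. par l \<omega>) k x\<bar> \<partial>\<mu>) \<le> e / 2" using N1 n by auto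
      have b: "(if k = 1 then 0 else (\<integral>x. \<bar>Efun f \<beta> n (\<lambda>l. par l \<omega>) (k - 1) x\<bar> \<partial>\<mu>)) \<le> e / 2"
        using N2 n e by auto
      show "Bd n \<omega> \<le> e" unfolding Bd_def using a b by linarith
    qed
    then show ?thesis by blast
  qed
  have part1: "AE \<omega> in M. (\<lambda>n. pi_k M f par xi k n \<omega>) \<longlonglongrightarrow> 0"
    using AEb
  proof eventually_elim
    case (elim \<omega>)
    show ?case
    proof (rule LIMSEQ_I)
      fix r :: real assume r: "0 < r"
      obtain N where N: "\<forall>n\<ge>N. \<forall>\<omega>. Bd n \<omega> \<le> r / 2" using unif[of "r / 2"] r by auto
      have "\<forall>n\<ge>max N 2. norm (pi_k M f par xi k n \<omega> - 0) < r"
      proof (intro allI impI)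
        fix n assume n: "max N 2 \<le> n"
        have "\<bar>pi_k M f par xi k n \<omega>\<bar> \<le> Bd n \<omega>" using elim n by auto
        also have "\<dots> \<le> r / 2" using N n by auto
        finally show "norm (pi_k M f par xi k n \<omega> - 0) < r" using r by simp
      qed
      then show "\<exists>no. \<forall>n\<ge>no. norm (pi_k M f par xi k n \<omega> - 0) < r" by blast
    qed
  qed
  have part2: "(\<lambda>n. \<integral>\<omega>. \<bar>pi_k M f par xi k n \<omega>\<bar> \<partial>M) \<longlonglongrightarrow> 0"
  proof (rule LIMSEQ_I)
    fix r :: real assume r: "0 < r"
    obtain N where N: "\<forall>n\<ge>N. \<forall>\<omega>. Bd n \<omega> \<le> r / 2" using unif[of "r / 2"] r by auto
    have "\<forall>n\<ge>max N 2. norm ((\<integral>\<omega>. \<bar>pi_k M f par xi k n \<omega>\<bar> \<partial>M) - 0) < r"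
    proof (intro allI impI)
      fix n assume n: "max N 2 \<le> n"
      have "(\<integral>\<omega>. \<bar>pi_k M f par xi k n \<omega>\<bar> \<partial>M) \<le> (\<integral>\<omega>. r / 2 \<partial>M)"
      proof (rule integral_mono_AE')
        show "integrable M (\<lambda>\<omega>. r / 2)" by simp
        show "AE \<omega> in M. \<bar>pi_k M f par xi k n \<omega>\<bar> \<le> r / 2"
          using AEb
        proof eventually_elim
          case (elim \<omega>)
          have "\<bar>pi_k M f par xi k n \<omega>\<bar> \<le> Bd n \<omega>" using elim n by auto
          also have "\<dots> \<le> r / 2" using N n by auto
          finally show ?case .
        qed
        show "AE \<omega> in M. 0 \<le> r / 2" using r by simp
      qed
      also have "\<dots> = r / 2" by (simp add: PMi.prob_space)
      finally have "(\<integral>\<omega>. \<bar>pi_k M f par xi k n \<omega>\<bar> \<partial>M) \<le> r / 2" .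
      moreover have "0 \<le> (\<integral>\<omega>. \<bar>pi_k M f par xi k n \<omega>\<bar> \<partial>M)"
        by (rule Bochner_Integration.integral_nonneg) simp
      ultimately show "norm ((\<integral>\<omega>. \<bar>pi_k M f par xi k n \<omega>\<bar> \<partial>M) - 0) < r" using r by simp
    qed
    then show "\<exists>no. \<forall>n\<ge>no. norm ((\<integral>\<omega>. \<bar>pi_k M f par xi k n \<omega>\<bar> \<partial>M) - 0) < r" by blast
  qed
  show ?thesis using part1 part2 by simp
qed

end
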